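(* Let $\Sigma=(B,\sigma)$ be a signed graph whose underlying graph $B$ is a block that is neither a single edge nor a circle, and suppose $[e,C,-]$ is a negative battery. (Then $B$ is $C$-layered, $e$ lies in one handle of $C$, and the other handle $H$ of $C$ contains a balancing edge; call $H$ the balancing handle.) Let $f$ be an edge of $B$ not in $C$, and let $D$ be the bridge of $C$ containing $f$. Then $f$ is a negative battery (i.e. lies in exactly one negative circle) if and only if there is exactly one path through $D$ that contains $f$.
   Context: A signed graph $\Sigma=(G,\sigma)$ is a finite graph $G$ with signature $\sigma:E(G)\to\{+,-\}$. A circle is a connected 2-regular subgraph; its sign is the product of its edge signs. Switching by $\zeta:V(G)\to\{+,-\}$ replaces $\sigma(e)$ by $\zeta(u)\sigma(e)\zeta(w)$. An edge $b$ is a balancing edge if $\Sigma$ can be switched so that $b$ is the only negative edge. A block is a maximal subgraph without a cutpoint. For a circle $C$, a chord is an edge not in $C$ joining two distinct vertices of $C$; a bridge of $C$ is either a chord or a connected component $D$ of $G\setminus V(C)$ together with all edges joining $D$ to $C$; its vertices of attachment are its vertices on $C$; a path through a bridge $D$ is a path in $D$ whose endpoints are two distinct vertices of attachment of $D$. Two chords cross if together with $C$ they form a subdivision of $K_4$. Endpoints of chords partition $C$ into segments; a segment is a handle if its endpoints are joined by a chord. If every bridge of $C$ has exactly two vertices of attachment, $C^*$ is obtained from $C$ by adding, for each bridge, one chord joining its vertices of attachment; handles of $C$ are those determined by $C^*$. The graph is $C$-layered if every bridge of $C$ has exactly two vertices of attachment and in $C^*$ no two chords cross and there are exactly two handles.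 $[e,C,-]$ means $C$ is a negative circle containing $e$ and the only negative circle containing $e$. *)

theory Defs
  imports Main
begin

text \<open>A finite loopless multigraph: vertex set V, edge set E, and an incidence
  map ends assigning to each edge its set of two distinct endpoints.
  A signature sigma assigns +1 or -1 to each edge.\<close>

definition graph :: "'v set \<Rightarrow> 'e set \<Rightarrow> ('e \<Rightarrow> 'v set) \<Rightarrow> bool" where
  "graph V E ends \<longleftrightarrow> finite V \<and> finite E \<and>
     (\<forall>e\<in>E. ends e \<subseteq> V \<and> card (ends e) = 2)"

definition signed_graph :: "'v set \<Rightarrow> 'e set \<Rightarrow> ('e \<Rightarrow> 'v set) \<Rightarrow> ('e \<Rightarrow> int) \<Rightarrow> bool" where
  "signed_graph V E ends \<sigma> \<longleftrightarrow> graph V E ends \<and> (\<forall>e\<in>E. \<sigma> e = 1 \<or> \<sigma> e = -1)"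

definition verts_of :: "('e \<Rightarrow> 'v set) \<Rightarrow> 'e set \<Rightarrow> 'v set" where
  "verts_of ends S = \<Union> (ends ` S)"

definition deg :: "('e \<Rightarrow> 'v set) \<Rightarrow> 'e set \<Rightarrow> 'v \<Rightarrow> nat" where
  "deg ends S v = card {e\<in>S. v \<in> ends e}"

definition edge_connected :: "('e \<Rightarrow> 'v set) \<Rightarrow> 'e set \<Rightarrow> bool" where
  "edge_connected ends S \<longleftrightarrow>
     (\<forall>e\<in>S. \<forall>g\<in>S. (e, g) \<in> {(a, b). a \<in> S \<and> b \<in> S \<and> ends a \<inter> ends b \<noteq> {}}\<^sup>*)"

definition is_circle :: "'e set \<Rightarrow> ('e \<Rightarrow> 'v set) \<Rightarrow> 'e set \<Rightarrow> bool" where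
  "is_circle E ends C \<longleftrightarrow> C \<subseteq> E \<and> C \<noteq> {} \<and> finite C \<and>
     (\<forall>v\<in>verts_of ends C. deg ends C v = 2) \<and> edge_connected ends C"

definition circ_sign :: "('e \<Rightarrow> int) \<Rightarrow> 'e set \<Rightarrow> int" where
  "circ_sign \<sigma> C = (\<Prod>e\<in>C. \<sigma> e)"

text \<open>[e,C,-]: C is a negative circle containing e and the only one.\<close>
definition neg_battery_circ :: "'e set \<Rightarrow> ('e \<Rightarrow> 'v set) \<Rightarrow> ('e \<Rightarrow> int) \<Rightarrow> 'e \<Rightarrow> 'e set \<Rightarrow> bool" where
  "neg_battery_circ E ends \<sigma> e C \<longleftrightarrow>
     is_circle E ends C \<and> circ_sign \<sigma> C = -1 \<and> e \<in> C \<and>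
     (\<forall>C'. is_circle E ends C' \<and> circ_sign \<sigma> C' = -1 \<and> e \<in> C' \<longrightarrow> C' = C)"

definition neg_battery :: "'e set \<Rightarrow> ('e \<Rightarrow> 'v set) \<Rightarrow> ('e \<Rightarrow> int) \<Rightarrow> 'e \<Rightarrow> bool" where
  "neg_battery E ends \<sigma> f \<longleftrightarrow>
     (\<exists>!C. is_circle E ends C \<and> circ_sign \<sigma> C = -1 \<and> f \<in> C)"

definition adj_avoid :: "'e set \<Rightarrow> ('e \<Rightarrow> 'v set) \<Rightarrow> 'v set \<Rightarrow> ('v \<times> 'v) set" where
  "adj_avoid E ends X = {(a, b). \<exists>g\<in>E. ends g = {a, b} \<and> a \<notin> X \<and> b \<notin> X}"

definition connected_graph :: "'v set \<Rightarrow> 'e set \<Rightarrow> ('e \<Rightarrow> 'v set) \<Rightarrow> bool" where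
  "connected_graph V E ends \<longleftrightarrow> (\<forall>u\<in>V. \<forall>w\<in>V. (u, w) \<in> (adj_avoid E ends {})\<^sup>*)"

definition cutpoint :: "'v set \<Rightarrow> 'e set \<Rightarrow> ('e \<Rightarrow> 'v set) \<Rightarrow> 'v \<Rightarrow> bool" where
  "cutpoint V E ends v \<longleftrightarrow> v \<in> V \<and>
     \<not> (\<forall>u\<in>V - {v}. \<forall>w\<in>V - {v}. (u, w) \<in> (adj_avoid E ends {v})\<^sup>*)"

definition is_block :: "'v set \<Rightarrow> 'e set \<Rightarrow> ('e \<Rightarrow> 'v set) \<Rightarrow> bool" where
  "is_block V E ends \<longleftrightarrow> V \<noteq> {} \<and> connected_graph V E ends \<and> (\<forall>v\<in>V. \<not> cutpoint V E ends v)"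

text \<open>The edge set of the bridge of circle C containing an edge f not in C:
  either the chord f itself, or all edges meeting the component of G - V(C)
  that contains an endpoint of f off C (i.e. that component together with the
  edges joining it to C).\<close>
definition bridge_comp :: "'v set \<Rightarrow> 'e set \<Rightarrow> ('e \<Rightarrow> 'v set) \<Rightarrow> 'e set \<Rightarrow> 'e \<Rightarrow> 'v set" where
  "bridge_comp V E ends C f =
     {y \<in> V - verts_of ends C. \<exists>x\<in>ends f - verts_of ends C.
        (x, y) \<in> (adj_avoid E ends (verts_of ends C))\<^sup>*}"

definition bridge_edges :: "'v set \<Rightarrow> 'e set \<Rightarrow> ('e \<Rightarrow> 'v set) \<Rightarrow> 'e set \<Rightarrow> 'e \<Rightarrow> 'e set" where
  "bridge_edges V E ends C f =
     (if ends f \<subseteq> verts_of ends C then {f}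
      else {g \<in> E - C. ends g \<inter> bridge_comp V E ends C f \<noteq> {}})"

definition attachments :: "'v set \<Rightarrow> 'e set \<Rightarrow> ('e \<Rightarrow> 'v set) \<Rightarrow> 'e set \<Rightarrow> 'e \<Rightarrow> 'v set" where
  "attachments V E ends C f = verts_of ends (bridge_edges V E ends C f) \<inter> verts_of ends C"

definition is_path :: "'e set \<Rightarrow> ('e \<Rightarrow> 'v set) \<Rightarrow> 'v list \<Rightarrow> 'e list \<Rightarrow> bool" where
  "is_path D ends vs es \<longleftrightarrow> length vs = Suc (length es) \<and> distinct vs \<and>
     (\<forall>i < length es. es ! i \<in> D \<and> ends (es ! i) = {vs ! i, vs ! Suc i})"

text \<open>Paths through the bridge D of C containing f, each taken as a subgraph
  (represented by its edge set): paths in D whose two (distinct) endpoints are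
  vertices of attachment of D.\<close>
definition paths_through :: "'v set \<Rightarrow> 'e set \<Rightarrow> ('e \<Rightarrow> 'v set) \<Rightarrow> 'e set \<Rightarrow> 'e \<Rightarrow> 'e set set" where
  "paths_through V E ends C f =
     {set es | vs es. is_path (bridge_edges V E ends C f) ends vs es \<and>
        hd vs \<noteq> last vs \<and>
        hd vs \<in> attachments V E ends C f \<and> last vs \<in> attachments V E ends C f}"

end

theory Submission
  imports Defs "HOL-Library.Transitive_Closure_Table"
begin


definition vpath :: "('v \<Rightarrow> 'v \<Rightarrow> bool) \<Rightarrow> 'v list \<Rightarrow> bool" where
  "vpath r vs \<longleftrightarrow> vs \<noteq> [] \<and> distinct vs \<and> successively r vs"

lemma vpath_single[simp]: "vpath r [x]"
  by (simp add: vpath_def)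

lemma vpath_prefix: "vpath r (xs @ ys) \<Longrightarrow> xs \<noteq> [] \<Longrightarrow> vpath r xs"
  by (simp add: vpath_def successively_append_iff)

lemma vpath_suffix: "vpath r (xs @ ys) \<Longrightarrow> ys \<noteq> [] \<Longrightarrow> vpath r ys"
  by (simp add: vpath_def successively_append_iff)

lemma vpath_join:
  assumes "vpath r (xs @ [x])" "vpath r (x # ys)" "set xs \<inter> set (x # ys) = {}"
  shows "vpath r (xs @ x # ys)"
proof -
  have "xs @ x # ys = (xs @ [x]) @ ys" by simp
  moreover have "successively r ((xs @ [x]) @ ys)"
    using assms unfolding vpath_def
    by (cases ys) (auto simp: successively_append_iff)
  ultimately show ?thesis using assms unfolding vpath_def by auto
qed

lemma vpath_snoc:
  assumes "vpath r xs" "r (last xs) t" "t \<notin> set xs"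
  shows "vpath r (xs @ [t])"
  using assms unfolding vpath_def by (auto simp: successively_append_iff)

lemma hd_app_nonempty: "xs \<noteq> [] \<Longrightarrow> hd (xs @ ys) = hd xs" by simp

lemma menger_fix:
  assumes A: "vpath r A" "hd A \<in> S" "last A = w"
    and B: "vpath r B" "hd B \<in> S" "last B \<in> T"
    and disj: "set A \<inter> set B = {}" and t: "t \<in> T" "r w t"
    and H: "\<And>z. \<exists>vs. vpath r vs \<and> hd vs \<in> S \<and> last vs \<in> T \<and> z \<notin> set vs"
  shows "\<exists>A B. vpath r A \<and> vpath r B \<and> hd A \<in> S \<and> last A \<in> T \<and> hd B \<in> S \<and> last B \<in> T
       \<and> set A \<inter> set B = {}"
proof (cases "t \<in> set A")
  case True
  then obtain a1 a2 where Ae: "A = a1 @ t # a2" by (meson split_list)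
  have "vpath r (a1 @ [t])" using A(1) Ae vpath_prefix[of r "a1 @ [t]" a2] by simp
  moreover have "hd (a1 @ [t]) \<in> S" using A(2) Ae by (cases a1) auto
  moreover have "set (a1 @ [t]) \<inter> set B = {}" using disj Ae by auto
  ultimately show ?thesis using B t by (intro exI[of _ "a1 @ [t]"] exI[of _ B]) simp
next
  case tA: False
  show ?thesis
  proof (cases "t \<in> set B")
    case False
    have "vpath r (A @ [t])" using vpath_snoc[OF A(1)] A(3) t tA by simp
    moreover have "hd (A @ [t]) \<in> S" using A(1,2) by (simp add: vpath_def)
    moreover have "set (A @ [t]) \<inter> set B = {}" using disj False by auto
    ultimately show ?thesis using B t by (intro exI[of _ "A @ [t]"] exI[of _ B]) simp
  next
    case True
    then obtain b1 b2 where Be: "B = b1 @ t # b2" by (meson split_list)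
    define B' where "B' = b1 @ [t]"
    have B'p: "vpath r B'" using B(1) Be vpath_prefix[of r "b1 @ [t]" b2] by (simp add: B'_def)
    have B'h: "hd B' \<in> S" using B(2) Be by (cases b1) (auto simp: B'_def)
    have B'l: "last B' = t" by (simp add: B'_def)
    have B'B: "set B' \<subseteq> set B" using Be by (auto simp: B'_def)
    obtain R where R: "vpath r R" "hd R \<in> S" "last R \<in> T" "t \<notin> set R" using H by blast
    show ?thesis
    proof (cases "set R \<inter> (set A \<union> set B') = {}")
      case True
      then show ?thesis using R B'p B'h B'l t by (intro exI[of _ R] exI[of _ B']) auto
    next
      case False
      then obtain r1 x r2 where Re: "R = r1 @ x # r2" and x: "x \<in> set A \<union> set B'"
        and r2: "\<forall>z\<in>set r2. z \<notin> set A \<union> set B'"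
        using split_list_last_prop[of R "\<lambda>z. z \<in> set A \<union> set B'"] by blast
      have xr2: "vpath r (x # r2)" using R(1) Re vpath_suffix[of r r1 "x # r2"] by simp
      have lR: "last (x # r2) \<in> T" using R(3) Re by simp
      have tr2: "t \<notin> set (x # r2)" using R(4) Re by simp
      show ?thesis
      proof (cases "x \<in> set A")
        case True
        then obtain a1 a2 where Ae: "A = a1 @ x # a2" by (meson split_list)
        have a1x: "vpath r (a1 @ [x])" using A(1) Ae vpath_prefix[of r "a1 @ [x]" a2] by simp
        have d: "set a1 \<inter> set (x # r2) = {}"
          using A(1) Ae r2 by (auto simp: vpath_def)
        have P1: "vpath r (a1 @ x # r2)" by (rule vpath_join[OF a1x xr2 d])
        have h1: "hd (a1 @ x # r2) \<in> S" using A(2) Ae by (cases a1) auto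
        have l1: "last (a1 @ x # r2) \<in> T" using lR by simp
        have d2: "set (a1 @ x # r2) \<inter> set B' = {}" using disj Ae r2 B'B by auto
        show ?thesis using P1 h1 l1 d2 B'p B'h B'l t by (intro exI[of _ "a1 @ x # r2"] exI[of _ B']) simp
      next
        case False
        then have xB: "x \<in> set B'" using x by simp
        then obtain c1 c2 where Ce: "B' = c1 @ x # c2" by (meson split_list)
        have xt: "x \<noteq> t" using tr2 by auto
        have c1x: "vpath r (c1 @ [x])" using B'p Ce vpath_prefix[of r "c1 @ [x]" c2] by simp
        have d: "set c1 \<inter> set (x # r2) = {}"
          using B'p Ce r2 by (auto simp: vpath_def)
        have P2: "vpath r (c1 @ x # r2)" by (rule vpath_join[OF c1x xr2 d])
        have h2: "hd (c1 @ x # r2) \<in> S" using B'h Ce by (cases c1) auto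
        have l2: "last (c1 @ x # r2) \<in> T" using lR by simp
        have tc1: "t \<notin> set c1"
        proof
          assume "t \<in> set c1"
          moreover have "t \<in> set (x # c2)"
          proof -
            have "last B' = last (x # c2)" using Ce by simp
            then show ?thesis using B'l by (metis last_in_set list.distinct(1))
          qed
          ultimately show False using B'p Ce by (auto simp: vpath_def)
        qed
        have P1: "vpath r (A @ [t])" using vpath_snoc[OF A(1)] A(3) t tA by simp
        have h1: "hd (A @ [t]) \<in> S" using A(1,2) by (simp add: vpath_def)
        have d2: "set (A @ [t]) \<inter> set (c1 @ x # r2) = {}"
          using disj Ce B'B r2 tc1 tr2 xt by auto
        show ?thesis using P1 h1 P2 h2 l2 d2 t by (intro exI[of _ "A @ [t]"] exI[of _ "c1 @ x # r2"]) simp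
      qed
    qed
  qed
qed

lemma menger2:
  assumes fin: "finite V" and rV: "\<And>a b. r a b \<Longrightarrow> a \<in> V \<and> b \<in> V"
    and H: "\<And>z. \<exists>vs. vpath r vs \<and> hd vs \<in> S \<and> last vs \<in> T \<and> z \<notin> set vs"
  shows "\<exists>A B. vpath r A \<and> vpath r B \<and> hd A \<in> S \<and> last A \<in> T \<and> hd B \<in> S \<and> last B \<in> T
       \<and> set A \<inter> set B = {}"
  using H
proof (induction "card (V - T)" arbitrary: T rule: less_induct)
  case less
  show ?case
  proof (cases "S \<inter> T = {}")
    case False
    then obtain s where s: "s \<in> S" "s \<in> T" by blast
    obtain R where R: "vpath r R" "hd R \<in> S" "last R \<in> T" "s \<notin> set R" using less.prems by blast
    have "vpath r [s]" by simp
    then show ?thesis using R s by (intro exI[of _ "[s]"] exI[of _ R]) auto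
  next
    case ST: True
    obtain P where P: "vpath r P" "hd P \<in> S" "last P \<in> T" using less.prems by blast
    then have "\<exists>z\<in>set P. z \<in> T" by (metis last_in_set vpath_def)
    then obtain ys t zs where Pe: "P = ys @ t # zs" and t: "t \<in> T" and ys: "\<forall>y\<in>set ys. y \<notin> T"
      using split_list_first_prop[of P "\<lambda>z. z \<in> T"] by blast
    have ysne: "ys \<noteq> []" using P(2) ST t Pe by auto
    define w where "w = last ys"
    have yt: "vpath r (ys @ [t])" using P(1) Pe vpath_prefix[of r "ys @ [t]" zs] by simp
    have rwt: "r w t" using yt ysne by (simp add: vpath_def w_def successively_append_iff)
    have wT: "w \<notin> T" using ys ysne w_def by auto
    have wV: "w \<in> V" using rV rwt by blast
    define T' where "T' = insert w T"
    have lt: "card (V - T') < card (V - T)"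
    proof -
      have "V - T' = (V - T) - {w}" by (auto simp: T'_def)
      moreover have "w \<in> V - T" using wV wT by blast
      ultimately show ?thesis using fin by (metis card_Diff1_less finite_Diff)
    qed
    have H': "\<And>z. \<exists>vs. vpath r vs \<and> hd vs \<in> S \<and> last vs \<in> T' \<and> z \<notin> set vs"
      using less.prems unfolding T'_def by blast
    obtain A B where AB: "vpath r A" "vpath r B" "hd A \<in> S" "last A \<in> T'" "hd B \<in> S" "last B \<in> T'"
      "set A \<inter> set B = {}" using less.hyps[OF lt H'] by blast
    show ?thesis
    proof (cases "last A = w")
      case True
      have "last B \<noteq> w" using AB True by (metis disjoint_iff last_in_set vpath_def)
      then have "last B \<in> T" using AB(6) T'_def by auto
      then show ?thesis using menger_fix[OF AB(1) AB(3) True AB(2) AB(5) _ AB(7) t rwt less.prems] by blast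
    next
      case nA: False
      show ?thesis
      proof (cases "last B = w")
        case True
        have "last A \<in> T" using AB nA T'_def by auto
        then obtain A' B' where X: "vpath r A'" "vpath r B'" "hd A' \<in> S" "last A' \<in> T" "hd B' \<in> S" "last B' \<in> T"
       "set A' \<inter> set B' = {}"
          using menger_fix[OF AB(2) AB(5) True AB(1) AB(3) _ _ t rwt less.prems] AB(7) by blast
        then show ?thesis by blast
      next
        case False
        then show ?thesis using AB nA T'_def by auto
      qed
    qed
  qed
qed


lemma is_path_len: "is_path D ends vs es \<Longrightarrow> length vs = Suc (length es)"
  by (simp add: is_path_def)

lemma is_path_edge: "is_path D ends vs es \<Longrightarrow> i < length es \<Longrightarrow> es!i \<in> D \<and> ends (es!i) = {vs!i, vs!Suc i}"
  by (simp add: is_path_def)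

lemma is_path_Nil[simp]: "is_path D ends vs [] \<longleftrightarrow> (\<exists>v. vs = [v])"
  by (auto simp: is_path_def length_Suc_conv)

lemma is_path_single[simp]: "is_path D ends [v] es \<longleftrightarrow> es = []"
  by (auto simp: is_path_def)

lemma is_path_Cons2:
  "is_path D ends (v # w # vs) (g # es) \<longleftrightarrow>
     g \<in> D \<and> ends g = {v, w} \<and> v \<notin> set (w # vs) \<and> is_path D ends (w # vs) es"
proof
  assume a: "is_path D ends (v # w # vs) (g # es)"
  have 0: "g \<in> D \<and> ends g = {v, w}" using a[unfolded is_path_def, THEN conjunct2, THEN conjunct2, rule_format, of 0] by simp
  have 1: "v \<notin> set (w # vs)" "distinct (w # vs)" using a by (auto simp: is_path_def)
  have 3: "\<forall>i<length es. es ! i \<in> D \<and> ends (es ! i) = {(w # vs) ! i, (w # vs) ! Suc i}"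
  proof (intro allI impI)
    fix i assume "i < length es"
    then show "es ! i \<in> D \<and> ends (es ! i) = {(w # vs) ! i, (w # vs) ! Suc i}"
      using a[unfolded is_path_def, THEN conjunct2, THEN conjunct2, rule_format, of "Suc i"] by simp
  qed
  have 2: "is_path D ends (w # vs) es"
    using 3 1 a unfolding is_path_def by simp
  show "g \<in> D \<and> ends g = {v, w} \<and> v \<notin> set (w # vs) \<and> is_path D ends (w # vs) es"
    using 0 1 2 by blast
next
  assume a: "g \<in> D \<and> ends g = {v, w} \<and> v \<notin> set (w # vs) \<and> is_path D ends (w # vs) es"
  have 3: "\<forall>i<length (g # es). (g # es) ! i \<in> D \<and> ends ((g # es) ! i) = {(v # w # vs) ! i, (v # w # vs) ! Suc i}"
  proof (intro allI impI)
    fix i assume i: "i < length (g # es)"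
    show "(g # es) ! i \<in> D \<and> ends ((g # es) ! i) = {(v # w # vs) ! i, (v # w # vs) ! Suc i}"
    proof (cases i)
      case 0 then show ?thesis using a by simp
    next
      case (Suc j) then show ?thesis using a i unfolding is_path_def by auto
    qed
  qed
  then show "is_path D ends (v # w # vs) (g # es)"
    using a unfolding is_path_def by auto
qed

lemma is_path_ConsE:
  assumes "is_path D ends vs es" "es \<noteq> []"
  obtains v w vs' g es' where "vs = v # w # vs'" "es = g # es'"
proof -
  obtain g es' where es: "es = g # es'" using assms(2) by (cases es) auto
  have "length vs = Suc (Suc (length es'))" using assms(1) es by (simp add: is_path_def)
  then obtain v w vs' where "vs = v # w # vs'" by (auto simp: length_Suc_conv)
  then show ?thesis using that es by blast
qed

lemma is_path_Cons_ex: "is_path D ends vs (g # es) \<Longrightarrow> \<exists>v w r. vs = v # w # r"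
  by (auto simp: is_path_def length_Suc_conv)

lemma is_path_set: "is_path D ends vs es \<Longrightarrow> set es \<subseteq> D"
  by (auto simp: is_path_def in_set_conv_nth)

lemma is_path_mono: "is_path D ends vs es \<Longrightarrow> set es \<subseteq> D' \<Longrightarrow> is_path D' ends vs es"
  by (auto simp: is_path_def)

lemma is_path_distinct: "is_path D ends vs es \<Longrightarrow> distinct vs"
  by (simp add: is_path_def)

lemma is_path_ne: "is_path D ends vs es \<Longrightarrow> vs \<noteq> []"
  by (auto simp: is_path_def)

lemma is_path_two: "is_path D ends [v, w] [g] \<longleftrightarrow> g \<in> D \<and> ends g = {v, w} \<and> v \<noteq> w"
  by (simp add: is_path_Cons2)

lemma is_path_append:
  assumes "is_path D ends vs1 es1" "is_path D ends vs2 es2" "last vs1 = hd vs2"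
    "set vs1 \<inter> set vs2 \<subseteq> {hd vs2}"
  shows "is_path D ends (vs1 @ tl vs2) (es1 @ es2)"
  using assms
proof (induction es1 arbitrary: vs1)
  case Nil
  then obtain v where "vs1 = [v]" by auto
  then show ?case using Nil is_path_ne[OF Nil(2)] by (cases vs2) auto
next
  case (Cons g es1')
  obtain v w r where v: "vs1 = v # w # r" using is_path_Cons_ex[OF Cons(2)] by blast
  have p1: "is_path D ends (w # r) es1'" and g: "g \<in> D" "ends g = {v, w}" and vn: "v \<notin> set (w # r)"
    using Cons(2) v by (auto simp: is_path_Cons2)
  have l: "last (w # r) = hd vs2" using Cons(4) v by simp
  have i: "set (w # r) \<inter> set vs2 \<subseteq> {hd vs2}" using Cons(5) v by auto
  have IH: "is_path D ends ((w # r) @ tl vs2) (es1' @ es2)"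
    using Cons.IH[OF p1 Cons(3) l i] .
  have dv2: "distinct vs2" using Cons(3) is_path_distinct by blast
  have ne2: "vs2 \<noteq> []" using Cons(3) is_path_ne by blast
  have "v \<notin> set (tl vs2)"
  proof
    assume vt: "v \<in> set (tl vs2)"
    then have "v \<in> set vs2" by (meson list.set_sel(2) ne2)
    then have "v = hd vs2" using Cons(5) v by auto
    then show False using vt dv2 ne2 by (cases vs2) auto
  qed
  then show ?case using IH g vn v by (simp add: is_path_Cons2)
qed

lemma is_path_rev: "is_path D ends vs es \<Longrightarrow> is_path D ends (rev vs) (rev es)"
proof (induction es arbitrary: vs)
  case Nil then show ?case by auto
next
  case (Cons g es')
  obtain v w r where v: "vs = v # w # r" using is_path_Cons_ex[OF Cons(2)] by blast
  have p1: "is_path D ends (w # r) es'" and g: "g \<in> D" "ends g = {v, w}" and vn: "v \<notin> set (w # r)"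
    using Cons(2) v by (auto simp: is_path_Cons2)
  have a: "is_path D ends (rev (w # r)) (rev es')" using Cons.IH[OF p1] .
  have b: "is_path D ends [w, v] [g]" using g vn by (auto simp: is_path_two insert_commute)
  have l: "last (rev (w # r)) = hd [w, v]" by simp
  have i: "set (rev (w # r)) \<inter> set [w, v] \<subseteq> {hd [w, v]}" using vn by auto
  have "is_path D ends (rev (w # r) @ tl [w, v]) (rev es' @ [g])"
    by (rule is_path_append[OF a b l i])
  then show ?case using v by simp
qed

lemma is_path_take: "is_path D ends vs es \<Longrightarrow> k \<le> length es \<Longrightarrow> is_path D ends (take (Suc k) vs) (take k es)"
proof (induction es arbitrary: vs k)
  case Nil then show ?case by auto
next
  case (Cons g es')
  obtain v w r where v: "vs = v # w # r" using is_path_Cons_ex[OF Cons(2)] by blast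
  have p1: "is_path D ends (w # r) es'" and g: "g \<in> D" "ends g = {v, w}" and vn: "v \<notin> set (w # r)"
    using Cons(2) v by (auto simp: is_path_Cons2)
  show ?case
  proof (cases k)
    case 0 then show ?thesis using v by simp
  next
    case (Suc k')
    have IH: "is_path D ends (take (Suc k') (w # r)) (take k' es')" using Cons.IH[OF p1] Cons(3) Suc by simp
    have "v \<notin> set (take (Suc k') (w # r))" using vn by (meson in_set_takeD)
    then show ?thesis using IH g v Suc by (simp add: is_path_Cons2)
  qed
qed

lemma is_path_drop: "is_path D ends vs es \<Longrightarrow> k \<le> length es \<Longrightarrow> is_path D ends (drop k vs) (drop k es)"
proof (induction es arbitrary: vs k)
  case Nil then show ?case by auto
next
  case (Cons g es')
  obtain v w r where v: "vs = v # w # r" using is_path_Cons_ex[OF Cons(2)] by blast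
  have p1: "is_path D ends (w # r) es'"
    using Cons(2) v by (auto simp: is_path_Cons2)
  show ?case
  proof (cases k)
    case 0 then show ?thesis using v Cons(2) by simp
  next
    case (Suc k')
    then show ?thesis using Cons.IH[OF p1] Cons(3) v by simp
  qed
qed

lemma is_path_hd: "is_path D ends vs es \<Longrightarrow> hd vs = vs ! 0"
  by (metis hd_conv_nth is_path_ne)

lemma is_path_last: "is_path D ends vs es \<Longrightarrow> last vs = vs ! length es"
  by (metis is_path_len is_path_ne last_conv_nth diff_Suc_1)

lemma is_path_distinct_es: "is_path D ends vs es \<Longrightarrow> distinct es"
proof (induction es arbitrary: vs)
  case Nil then show ?case by simp
next
  case (Cons g es')
  obtain v w r where v: "vs = v # w # r" using is_path_Cons_ex[OF Cons(2)] by blast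
  have p1: "is_path D ends (w # r) es'" and g: "ends g = {v, w}" and vn: "v \<notin> set (w # r)"
    using Cons(2) v by (auto simp: is_path_Cons2)
  have "g \<notin> set es'"
  proof
    assume "g \<in> set es'"
    then obtain i where i: "i < length es'" "es' ! i = g" by (meson in_set_conv_nth)
    then have "ends g = {(w#r) ! i, (w#r) ! Suc i}" using p1 is_path_edge by metis
    moreover have "(w#r) ! i \<in> set (w # r)" using i is_path_len[OF p1] by (intro nth_mem) simp
    moreover have "(w#r) ! Suc i \<in> set (w # r)" using i is_path_len[OF p1] by (intro nth_mem) simp
    moreover have "v \<in> ends g" using g by simp
    ultimately have "v \<in> set (w # r)" by (metis insert_iff singletonD)
    then show False using vn by simp
  qed
  then show ?case using Cons.IH[OF p1] by simp
qed

lemma is_path_verts: "is_path D ends vs es \<Longrightarrow> es \<noteq> [] \<Longrightarrow> verts_of ends (set es) = set vs"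
proof (induction es arbitrary: vs)
  case Nil then show ?case by simp
next
  case (Cons g es')
  obtain v w r where v: "vs = v # w # r" using is_path_Cons_ex[OF Cons(2)] by blast
  have p1: "is_path D ends (w # r) es'" and g: "ends g = {v, w}"
    using Cons(2) v by (auto simp: is_path_Cons2)
  show ?case
  proof (cases "es' = []")
    case True
    then have "r = []" using p1 by auto
    then show ?thesis using True g v by (simp add: verts_of_def)
  next
    case False
    then have "verts_of ends (set es') = set (w # r)" using Cons.IH[OF p1] by simp
    then show ?thesis using g v by (auto simp: verts_of_def)
  qed
qed

lemma deg_insert: "finite S \<Longrightarrow> g \<notin> S \<Longrightarrow> deg ends (insert g S) v = deg ends S v + (if v \<in> ends g then 1 else 0)"
proof -
  assume f: "finite S" and g: "g \<notin> S"
  have "{e\<in>insert g S. v \<in> ends e} = (if v \<in> ends g then insert g {e\<in>S. v \<in> ends e} else {e\<in>S. v \<in> ends e})"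
    by auto
  then show ?thesis using f g by (simp add: deg_def)
qed

lemma deg_empty[simp]: "deg ends {} v = 0" by (simp add: deg_def)

lemma is_path_deg:
  "is_path D ends vs es \<Longrightarrow> es \<noteq> [] \<Longrightarrow>
   deg ends (set es) v = (if v \<in> set vs then (if v = hd vs \<or> v = last vs then 1 else 2) else 0)"
proof (induction es arbitrary: vs)
  case Nil then show ?case by simp
next
  case (Cons g es')
  obtain u w r where v: "vs = u # w # r" using is_path_Cons_ex[OF Cons(2)] by blast
  have p1: "is_path D ends (w # r) es'" and g: "ends g = {u, w}" and un: "u \<notin> set (w # r)"
    using Cons(2) v by (auto simp: is_path_Cons2)
  have gn: "g \<notin> set es'" using is_path_distinct_es[OF Cons(2)] by simp
  have d: "deg ends (set (g # es')) v = deg ends (set es') v + (if v \<in> ends g then 1 else 0)"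
    using deg_insert[of "set es'" g ends v] gn by simp
  show ?case
  proof (cases "es' = []")
    case True
    then have "r = []" using p1 by auto
    then show ?thesis using True g v d un by auto
  next
    case False
    have IH: "deg ends (set es') v = (if v \<in> set (w # r) then (if v = w \<or> v = last (w # r) then 1 else 2) else 0)"
      using Cons.IH[OF p1 False] by simp
    have dw: "distinct (w # r)" using p1 is_path_distinct by blast
    have rne: "r \<noteq> []" using False is_path_len[OF p1] by auto
    have lw: "last (w # r) \<noteq> w" using dw rne by (cases r rule: rev_cases) auto
    have lv: "last vs = last (w # r)" using v by simp
    show ?thesis using IH d g v un lw lv by auto
  qed
qed


definition erel :: "('e \<Rightarrow> 'v set) \<Rightarrow> 'e set \<Rightarrow> ('e \<times> 'e) set" where
  "erel ends S = {(a, b). a \<in> S \<and> b \<in> S \<and> ends a \<inter> ends b \<noteq> {}}"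

lemma edge_connected_erel: "edge_connected ends S \<longleftrightarrow> (\<forall>a\<in>S. \<forall>b\<in>S. (a, b) \<in> (erel ends S)\<^sup>*)"
  by (simp add: edge_connected_def erel_def)

lemma erel_sym: "sym (erel ends S)"
  by (auto simp: erel_def sym_def)

lemma erel_mono: "S \<subseteq> S' \<Longrightarrow> erel ends S \<subseteq> erel ends S'"
  by (auto simp: erel_def)

lemma erel_rtrancl_sym: "(a, b) \<in> (erel ends S)\<^sup>* \<Longrightarrow> (b, a) \<in> (erel ends S)\<^sup>*"
  by (meson erel_sym sym_rtrancl symD)

lemma ec_single: "edge_connected ends {g}"
  by (simp add: edge_connected_erel)

lemma ec_union:
  assumes A: "edge_connected ends A" and B: "edge_connected ends B"
    and a: "a \<in> A" and b: "b \<in> B" and ab: "ends a \<inter> ends b \<noteq> {}"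
  shows "edge_connected ends (A \<union> B)"
proof -
  let ?R = "(erel ends (A \<union> B))\<^sup>*"
  have iA: "(erel ends A)\<^sup>* \<subseteq> ?R" by (intro rtrancl_mono erel_mono) simp
  have iB: "(erel ends B)\<^sup>* \<subseteq> ?R" by (intro rtrancl_mono erel_mono) simp
  have mA: "\<And>x y. x \<in> A \<Longrightarrow> y \<in> A \<Longrightarrow> (x, y) \<in> ?R"
    using A iA unfolding edge_connected_erel by blast
  have mB: "\<And>x y. x \<in> B \<Longrightarrow> y \<in> B \<Longrightarrow> (x, y) \<in> ?R"
    using B iB unfolding edge_connected_erel by blast
  have s1: "(a, b) \<in> ?R" using a b ab by (intro r_into_rtrancl) (auto simp: erel_def)
  have s2: "(b, a) \<in> ?R" by (rule erel_rtrancl_sym[OF s1])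
  show ?thesis unfolding edge_connected_erel
  proof (intro ballI)
    fix x y assume x: "x \<in> A \<union> B" and y: "y \<in> A \<union> B"
    show "(x, y) \<in> ?R"
    proof (cases "x \<in> A")
      case xA: True
      show ?thesis
      proof (cases "y \<in> A")
        case True then show ?thesis by (rule mA[OF xA])
      next
        case False then have "y \<in> B" using y by blast
        then show ?thesis using rtrancl_trans[OF rtrancl_trans[OF mA[OF xA a] s1] mB[OF b]] by blast
      qed
    next
      case xA: False
      then have xB: "x \<in> B" using x by blast
      show ?thesis
      proof (cases "y \<in> B")
        case True then show ?thesis by (rule mB[OF xB])
      next
        case False then have "y \<in> A" using y by blast
        then show ?thesis using rtrancl_trans[OF rtrancl_trans[OF mB[OF xB b] s2] mA[OF a]] by blast
      qed
    qed
  qed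
qed

lemma is_path_ec: "is_path D ends vs es \<Longrightarrow> edge_connected ends (set es)"
proof (induction es arbitrary: vs)
  case Nil then show ?case by (simp add: edge_connected_erel)
next
  case (Cons g es')
  obtain v w r where v: "vs = v # w # r" using is_path_Cons_ex[OF Cons(2)] by blast
  have p1: "is_path D ends (w # r) es'" and g: "ends g = {v, w}"
    using Cons(2) v by (auto simp: is_path_Cons2)
  show ?case
  proof (cases "es' = []")
    case True then show ?thesis by (simp add: ec_single)
  next
    case False
    then have "es' ! 0 \<in> set es'" by simp
    moreover have "w \<in> ends (es' ! 0)" using is_path_edge[OF p1, of 0] False by simp
    moreover have "w \<in> ends g" using g by simp
    ultimately have "edge_connected ends ({g} \<union> set es')"
      using ec_union[OF ec_single Cons.IH[OF p1], where a=g and b="es'!0"] by blast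
    then show ?thesis by simp
  qed
qed

lemma deg_union: "A \<inter> B = {} \<Longrightarrow> finite A \<Longrightarrow> finite B \<Longrightarrow> deg ends (A \<union> B) v = deg ends A v + deg ends B v"
proof -
  assume d: "A \<inter> B = {}" and f: "finite A" "finite B"
  have "{e \<in> A \<union> B. v \<in> ends e} = {e \<in> A. v \<in> ends e} \<union> {e \<in> B. v \<in> ends e}" by auto
  moreover have "card ({e \<in> A. v \<in> ends e} \<union> {e \<in> B. v \<in> ends e}) = card {e \<in> A. v \<in> ends e} + card {e \<in> B. v \<in> ends e}"
    using d f by (intro card_Un_disjoint) auto
  ultimately show ?thesis by (simp add: deg_def)
qed

lemma verts_of_Un: "verts_of ends (A \<union> B) = verts_of ends A \<union> verts_of ends B"
  by (auto simp: verts_of_def)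

lemma is_path_hd_in: "is_path D ends vs es \<Longrightarrow> es \<noteq> [] \<Longrightarrow> hd vs \<in> ends (es ! 0)"
  using is_path_edge[of D ends vs es 0] is_path_hd[of D ends vs es] by auto

lemma two_paths_circle:
  assumes P: "is_path E ends vs1 es1" and Q: "is_path E ends vs2 es2"
    and h: "hd vs1 = hd vs2" and l: "last vs1 = last vs2" and xy: "hd vs1 \<noteq> last vs1"
    and vi: "set vs1 \<inter> set vs2 \<subseteq> {hd vs1, last vs1}" and ei: "set es1 \<inter> set es2 = {}"
  shows "is_circle E ends (set es1 \<union> set es2)"
proof -
  have ne1: "es1 \<noteq> []" using P xy by auto
  have ne2: "es2 \<noteq> []" using Q xy h l by auto
  have vU: "verts_of ends (set es1 \<union> set es2) = set vs1 \<union> set vs2"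
    using is_path_verts[OF P ne1] is_path_verts[OF Q ne2] by (simp add: verts_of_Un)
  have dg: "\<And>v. deg ends (set es1 \<union> set es2) v = deg ends (set es1) v + deg ends (set es2) v"
    using ei by (intro deg_union) auto
  note d1 = is_path_deg[OF P ne1] and d2 = is_path_deg[OF Q ne2]
  have deg2: "\<forall>v\<in>verts_of ends (set es1 \<union> set es2). deg ends (set es1 \<union> set es2) v = 2"
  proof
    fix v assume "v \<in> verts_of ends (set es1 \<union> set es2)"
    then have v: "v \<in> set vs1 \<union> set vs2" using vU by simp
    have hh1: "hd vs1 \<in> set vs1" "last vs1 \<in> set vs1" using is_path_ne[OF P] by auto
    have hh2: "hd vs2 \<in> set vs2" "last vs2 \<in> set vs2" using is_path_ne[OF Q] by auto
    show "deg ends (set es1 \<union> set es2) v = 2"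
      using v vi hh1 hh2 h l xy unfolding dg d1 d2 by auto
  qed
  have ec: "edge_connected ends (set es1 \<union> set es2)"
  proof (rule ec_union[OF is_path_ec[OF P] is_path_ec[OF Q]])
    show "es1 ! 0 \<in> set es1" using ne1 by simp
    show "es2 ! 0 \<in> set es2" using ne2 by simp
    show "ends (es1 ! 0) \<inter> ends (es2 ! 0) \<noteq> {}"
      using is_path_hd_in[OF P ne1] is_path_hd_in[OF Q ne2] h by auto
  qed
  show ?thesis unfolding is_circle_def
    using is_path_set[OF P] is_path_set[OF Q] ne1 deg2 ec by auto
qed

lemma circle_deg: "is_circle E ends Z \<Longrightarrow> deg ends Z v = (if v \<in> verts_of ends Z then 2 else 0)"
proof -
  assume c: "is_circle E ends Z"
  show ?thesis
  proof (cases "v \<in> verts_of ends Z")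
    case True then show ?thesis using c by (simp add: is_circle_def)
  next
    case False
    then have X: "{e \<in> Z. v \<in> ends e} = {}" by (auto simp: verts_of_def)
    show ?thesis using False unfolding deg_def X by simp
  qed
qed

lemma circle_subset_eq:
  assumes c1: "is_circle E ends Z1" and c2: "is_circle E ends Z2" and s: "Z1 \<subseteq> Z2"
  shows "Z1 = Z2"
proof -
  obtain a0 where a0: "a0 \<in> Z1" using c1 by (auto simp: is_circle_def)
  have f2: "finite Z2" using c2 by (simp add: is_circle_def)
  have "\<forall>b\<in>Z2. b \<in> Z1"
  proof
    fix b assume b: "b \<in> Z2"
    have ec2: "edge_connected ends Z2" using c2 by (simp add: is_circle_def)
    have a02: "a0 \<in> Z2" using a0 s by blast
    have "(a0, b) \<in> (erel ends Z2)\<^sup>*" using ec2[unfolded edge_connected_erel] a02 b by simp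
    then show "b \<in> Z1"
    proof (induction rule: rtrancl_induct)
      case base then show ?case using a0 .
    next
      case (step y z)
      then obtain v where v: "v \<in> ends y" "v \<in> ends z" and z: "z \<in> Z2" by (auto simp: erel_def)
      have vv: "v \<in> verts_of ends Z1" using step(3) v by (auto simp: verts_of_def)
      then have vv2: "v \<in> verts_of ends Z2" using s by (auto simp: verts_of_def)
      have "card {e \<in> Z1. v \<in> ends e} = card {e \<in> Z2. v \<in> ends e}"
        using circle_deg[OF c1, of v] circle_deg[OF c2, of v] vv vv2 by (simp add: deg_def)
      moreover have "{e \<in> Z1. v \<in> ends e} \<subseteq> {e \<in> Z2. v \<in> ends e}" using s by auto
      moreover have "finite {e \<in> Z2. v \<in> ends e}" using f2 by simp
      ultimately have "{e \<in> Z1. v \<in> ends e} = {e \<in> Z2. v \<in> ends e}" by (metis card_subset_eq)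
      then show ?case using z v by blast
    qed
  qed
  then show ?thesis using s by blast
qed

definition evenset :: "('e \<Rightarrow> 'v set) \<Rightarrow> 'e set \<Rightarrow> bool" where
  "evenset ends F \<longleftrightarrow> (\<forall>v. even (deg ends F v))"

lemma circle_even: "is_circle E ends Z \<Longrightarrow> evenset ends Z"
  by (simp add: evenset_def circle_deg)

lemma card_symdiff: "finite X \<Longrightarrow> finite Y \<Longrightarrow> card ((X - Y) \<union> (Y - X)) + 2 * card (X \<inter> Y) = card X + card Y"
proof -
  assume f: "finite X" "finite Y"
  have 1: "card X = card (X - Y) + card (X \<inter> Y)"
  proof -
    have "X = (X - Y) \<union> (X \<inter> Y)" by blast
    then have "card X = card ((X - Y) \<union> (X \<inter> Y))" by simp
    also have "\<dots> = card (X - Y) + card (X \<inter> Y)" using f by (intro card_Un_disjoint) auto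
    finally show ?thesis .
  qed
  have 2: "card Y = card (Y - X) + card (X \<inter> Y)"
  proof -
    have "Y = (Y - X) \<union> (X \<inter> Y)" by blast
    then have "card Y = card ((Y - X) \<union> (X \<inter> Y))" by simp
    also have "\<dots> = card (Y - X) + card (X \<inter> Y)" using f by (intro card_Un_disjoint) auto
    finally show ?thesis .
  qed
  have 3: "card ((X - Y) \<union> (Y - X)) = card (X - Y) + card (Y - X)" using f by (intro card_Un_disjoint) auto
  show ?thesis using 1 2 3 by simp
qed

lemma even_symdiff:
  assumes "finite A" "finite B" "evenset ends A" "evenset ends B"
  shows "evenset ends ((A - B) \<union> (B - A))"
  unfolding evenset_def
proof
  fix v
  let ?X = "{e \<in> A. v \<in> ends e}" and ?Y = "{e \<in> B. v \<in> ends e}"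
  have "{e \<in> (A - B) \<union> (B - A). v \<in> ends e} = (?X - ?Y) \<union> (?Y - ?X)" by auto
  then have "deg ends ((A - B) \<union> (B - A)) v + 2 * card (?X \<inter> ?Y) = deg ends A v + deg ends B v"
    using card_symdiff[of ?X ?Y] assms(1,2) by (simp add: deg_def)
  moreover have "even (deg ends A v)" "even (deg ends B v)" using assms(3,4) by (auto simp: evenset_def)
  ultimately have "even (deg ends ((A - B) \<union> (B - A)) v + 2 * card (?X \<inter> ?Y))" by simp
  then show "even (deg ends ((A - B) \<union> (B - A)) v)" by simp
qed

lemma even_sub_circle:
  assumes c: "is_circle E ends C" and F: "F \<subseteq> C" "evenset ends F" and e: "e \<in> C" "e \<notin> F"
    and g: "graph V E ends"
  shows "F = {}"
proof (rule ccontr)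
  assume "F \<noteq> {}"
  then obtain a where a: "a \<in> F" by blast
  have fC: "finite C" using c by (simp add: is_circle_def)
  have ec: "edge_connected ends C" using c by (simp add: is_circle_def)
  have aC: "a \<in> C" using a F by blast
  have "(a, e) \<in> (erel ends C)\<^sup>*" using ec[unfolded edge_connected_erel] aC e by simp
  then have "e \<in> F"
  proof (induction rule: rtrancl_induct)
    case base then show ?case using a .
  next
    case (step y z)
    then obtain v where v: "v \<in> ends y" "v \<in> ends z" and z: "z \<in> C" and y: "y \<in> C" by (auto simp: erel_def)
    show ?case
    proof (rule ccontr)
      assume zF: "z \<notin> F"
      have yz: "y \<noteq> z" using zF step(3) by blast
      have vv: "v \<in> verts_of ends C" using y v by (auto simp: verts_of_def)
      have c2: "card {e \<in> C. v \<in> ends e} = 2" using circle_deg[OF c, of v] vv by (simp add: deg_def)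
      have sub: "{y, z} \<subseteq> {e \<in> C. v \<in> ends e}" using v y z by auto
      have "{y, z} = {e \<in> C. v \<in> ends e}"
        by (rule card_subset_eq) (use c2 sub yz fC in auto)
      then have "{e \<in> C. v \<in> ends e} = {y, z}" by simp
      then have "{e \<in> F. v \<in> ends e} = {y}" using F(1) step(3) zF v by auto
      then have "deg ends F v = 1" by (simp add: deg_def)
      moreover have "even (deg ends F v)" using F(2) by (simp add: evenset_def)
      ultimately show False by simp
    qed
  qed
  then show False using e by blast
qed

lemma sign_symdiff:
  assumes "finite A" "finite B" "\<forall>g\<in>A \<inter> B. \<sigma> g = 1 \<or> \<sigma> g = -1"
  shows "circ_sign \<sigma> ((A - B) \<union> (B - A)) = circ_sign \<sigma> A * circ_sign \<sigma> B"
proof -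
  have sq: "prod \<sigma> (A \<inter> B) * prod \<sigma> (A \<inter> B) = 1"
  proof -
    have "prod \<sigma> (A \<inter> B) * prod \<sigma> (A \<inter> B) = prod (\<lambda>g. \<sigma> g * \<sigma> g) (A \<inter> B)"
      by (simp add: prod.distrib)
    also have "\<dots> = prod (\<lambda>g. 1) (A \<inter> B)"
    proof (rule prod.cong)
      fix x assume "x \<in> A \<inter> B"
      then have "\<sigma> x = 1 \<or> \<sigma> x = -1" using assms(3) by blast
      then show "\<sigma> x * \<sigma> x = 1" by auto
    qed simp
    finally show ?thesis by simp
  qed
  have a: "prod \<sigma> A = prod \<sigma> (A \<inter> B) * prod \<sigma> (A - B)" using assms(1) by (metis prod.Int_Diff)
  have b: "prod \<sigma> B = prod \<sigma> (A \<inter> B) * prod \<sigma> (B - A)" using assms(2) by (metis prod.Int_Diff Int_commute)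
  have c: "prod \<sigma> ((A - B) \<union> (B - A)) = prod \<sigma> (A - B) * prod \<sigma> (B - A)"
    using assms(1,2) by (intro prod.union_disjoint) auto
  have "prod \<sigma> A * prod \<sigma> B = (prod \<sigma> (A \<inter> B) * prod \<sigma> (A \<inter> B)) * (prod \<sigma> (A - B) * prod \<sigma> (B - A))"
    unfolding a b by (simp add: algebra_simps)
  then show ?thesis unfolding circ_sign_def using c sq by simp
qed

lemma sign_pm: "finite A \<Longrightarrow> \<forall>g\<in>A. \<sigma> g = 1 \<or> \<sigma> g = -1 \<Longrightarrow> circ_sign \<sigma> A = 1 \<or> circ_sign \<sigma> A = -1"
proof (induction A rule: finite_induct)
  case empty then show ?case by (simp add: circ_sign_def)
next
  case (insert x F)
  then show ?case by (auto simp: circ_sign_def)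
qed


lemma circle_mono: "is_circle D ends S \<Longrightarrow> S \<subseteq> E \<Longrightarrow> is_circle E ends S"
  by (simp add: is_circle_def)

lemma graph_ends: "graph V E ends \<Longrightarrow> g \<in> E \<Longrightarrow> x \<in> ends g \<Longrightarrow> \<exists>w. w \<noteq> x \<and> ends g = {x, w}"
proof -
  assume G: "graph V E ends" and g: "g \<in> E" and x: "x \<in> ends g"
  have "card (ends g) = 2" using G g by (simp add: graph_def)
  then obtain a b where ab: "a \<noteq> b" "ends g = {a, b}" unfolding card_2_iff by blast
  then show ?thesis using x by auto
qed

lemma graph_ends_finite: "graph V E ends \<Longrightarrow> g \<in> E \<Longrightarrow> finite (ends g)"
proof -
  assume "graph V E ends" "g \<in> E"
  then have "card (ends g) = 2" by (simp add: graph_def)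
  then show ?thesis by (intro card_ge_0_finite) simp
qed

lemma verts_finite: "graph V E ends \<Longrightarrow> S \<subseteq> E \<Longrightarrow> finite S \<Longrightarrow> finite (verts_of ends S)"
proof -
  assume G: "graph V E ends" and S: "S \<subseteq> E" "finite S"
  have "\<forall>g\<in>S. finite (ends g)" using graph_ends_finite[OF G] S by blast
  then show ?thesis unfolding verts_of_def using S by simp
qed

lemma circle_cyc:
  assumes G: "graph V E ends" and c: "is_circle E ends Z" and x: "x \<in> verts_of ends Z"
  shows "\<exists>vs es h. is_path Z ends vs es \<and> es \<noteq> [] \<and> hd vs = x \<and> h \<in> Z \<and> h \<notin> set es
     \<and> ends h = {last vs, x} \<and> Z = insert h (set es)"
proof -
  have ZE: "Z \<subseteq> E" and fZ: "finite Z" using c by (auto simp: is_circle_def)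
  have fv: "finite (verts_of ends Z)" using verts_finite[OF G ZE fZ] .
  define Pn where "Pn n \<longleftrightarrow> (\<exists>vs es. is_path Z ends vs es \<and> hd vs = x \<and> length es = n)" for n
  have bound: "\<And>n. Pn n \<Longrightarrow> n \<le> card (verts_of ends Z)"
  proof -
    fix n assume "Pn n"
    then obtain vs es where p: "is_path Z ends vs es" "length es = n" unfolding Pn_def by blast
    show "n \<le> card (verts_of ends Z)"
    proof (cases "es = []")
      case True then show ?thesis using p by simp
    next
      case False
      have "set vs = verts_of ends (set es)" using is_path_verts[OF p(1) False] by simp
      also have "\<dots> \<subseteq> verts_of ends Z" using is_path_set[OF p(1)] by (auto simp: verts_of_def)
      finally have "card (set vs) \<le> card (verts_of ends Z)" using fv by (simp add: card_mono)
      moreover have "card (set vs) = length vs" using is_path_distinct[OF p(1)] by (simp add: distinct_card)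
      ultimately show ?thesis using is_path_len[OF p(1)] p(2) by simp
    qed
  qed
  obtain g0 where g0: "g0 \<in> Z" "x \<in> ends g0" using x by (auto simp: verts_of_def)
  obtain w0 where w0: "w0 \<noteq> x" "ends g0 = {x, w0}" using graph_ends[OF G _ g0(2)] g0(1) ZE by blast
  have P1: "Pn 1" unfolding Pn_def
    by (rule exI[of _ "[x, w0]"], rule exI[of _ "[g0]"]) (use g0 w0 in \<open>auto simp: is_path_two\<close>)
  define n where "n = (GREATEST n. Pn n)"
  have Pn: "Pn n" unfolding n_def by (rule GreatestI_nat[where P=Pn, OF P1]) (use bound in blast)
  have n1: "1 \<le> n" unfolding n_def by (rule Greatest_le_nat[where P=Pn, OF P1]) (use bound in blast)
  have nmax: "\<And>m. Pn m \<Longrightarrow> m \<le> n"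
  proof -
    fix m assume "Pn m"
    then show "m \<le> n" unfolding n_def by (rule Greatest_le_nat[where P=Pn]) (use bound in blast)
  qed
  obtain vs es where p: "is_path Z ends vs es" "hd vs = x" "length es = n" using Pn unfolding Pn_def by blast
  have esne: "es \<noteq> []" using p(3) n1 by auto
  have lv: "length vs = Suc n" using is_path_len[OF p(1)] p(3) by simp
  have dv: "distinct vs" using is_path_distinct[OF p(1)] .
  have de: "distinct es" using is_path_distinct_es[OF p(1)] .
  define y where "y = last vs"
  have yn: "y = vs ! n" using is_path_last[OF p(1)] p(3) y_def by simp
  have x0: "x = vs ! 0" using is_path_hd[OF p(1)] p(2) by simp
  have xy: "x \<noteq> y" using x0 yn dv lv n1 by (simp add: nth_eq_iff_index_eq)
  define el where "el = es ! (n - 1)"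
  have el: "el \<in> Z" "ends el = {vs ! (n - 1), vs ! n}"
    using is_path_edge[OF p(1), of "n - 1"] p(3) n1 el_def by auto
  have yel: "y \<in> ends el" using el yn by simp
  have yv: "y \<in> verts_of ends Z" using el(1) yel by (auto simp: verts_of_def)
  have cy: "card {g \<in> Z. y \<in> ends g} = 2" using circle_deg[OF c, of y] yv by (simp add: deg_def)
  have "\<exists>h. h \<in> Z \<and> y \<in> ends h \<and> h \<noteq> el"
  proof (rule ccontr)
    assume "\<not> ?thesis"
    then have "{g \<in> Z. y \<in> ends g} \<subseteq> {el}" by auto
    then have "card {g \<in> Z. y \<in> ends g} \<le> card {el}" by (intro card_mono) auto
    then have "card {g \<in> Z. y \<in> ends g} \<le> 1" by simp
    then show False using cy by simp
  qed
  then obtain h where h: "h \<in> Z" "y \<in> ends h" "h \<noteq> el" by blast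
  have hn: "h \<notin> set es"
  proof
    assume "h \<in> set es"
    then obtain j where j: "j < n" "es ! j = h" using p(3) by (metis in_set_conv_nth)
    have "ends h = {vs ! j, vs ! Suc j}" using is_path_edge[OF p(1), of j] j p(3) by simp
    then have "vs ! n = vs ! j \<or> vs ! n = vs ! Suc j" using h(2) yn by auto
    then have "n = j \<or> n = Suc j" using dv lv j by (auto simp: nth_eq_iff_index_eq)
    then have "j = n - 1" using j by auto
    then show False using h(3) j el_def by simp
  qed
  obtain u where u: "u \<noteq> y" "ends h = {y, u}" using graph_ends[OF G _ h(2)] h(1) ZE by blast
  have uv: "u \<in> set vs"
  proof (rule ccontr)
    assume un: "u \<notin> set vs"
    have "is_path Z ends [y, u] [h]" using h u by (simp add: is_path_two)
    then have "is_path Z ends (vs @ tl [y, u]) (es @ [h])"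
      by (rule is_path_append[OF p(1)]) (use y_def un in auto)
    then have "Pn (Suc n)" unfolding Pn_def using p(3)
      by (intro exI[of _ "vs @ [u]"] exI[of _ "es @ [h]"]) (use p(2) is_path_ne[OF p(1)] in auto)
    then have "Suc n \<le> n" by (rule nmax)
    then show False by simp
  qed
  then obtain j where j: "j < Suc n" "vs ! j = u" using lv by (metis in_set_conv_nth)
  have jn: "j \<noteq> n" using j u yn by auto
  have j0: "j = 0"
  proof (rule ccontr)
    assume "j \<noteq> 0"
    then have jj: "0 < j" "j < n" using j jn by auto
    define a where "a = es ! (j - 1)"
    define b where "b = es ! j"
    have a: "a \<in> Z" "u \<in> ends a" using is_path_edge[OF p(1), of "j - 1"] jj p(3) j(2) a_def by auto
    have b: "b \<in> Z" "u \<in> ends b" using is_path_edge[OF p(1), of j] jj p(3) j(2) b_def by auto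
    have ab: "a \<noteq> b" using de jj p(3) a_def b_def by (simp add: nth_eq_iff_index_eq)
    have "a \<in> set es" "b \<in> set es" using jj p(3) a_def b_def by auto
    then have ah: "a \<noteq> h" "b \<noteq> h" using hn by auto
    have "{a, b, h} \<subseteq> {g \<in> Z. u \<in> ends g}" using a b h u by auto
    then have "card {a, b, h} \<le> card {g \<in> Z. u \<in> ends g}" using fZ by (intro card_mono) auto
    moreover have "card {a, b, h} = 3" using ab ah by auto
    moreover have "u \<in> verts_of ends Z" using a by (auto simp: verts_of_def)
    then have "card {g \<in> Z. u \<in> ends g} = 2" using circle_deg[OF c, of u] by (simp add: deg_def)
    ultimately show False by simp
  qed
  have ux: "u = x" using j0 j x0 by simp
  have q: "is_path Z ends [x, y] [h]" using h u ux xy by (simp add: is_path_two insert_commute)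
  have cz: "is_circle Z ends (set es \<union> set [h])"
    by (rule two_paths_circle[OF p(1) q]) (use p(2) y_def xy hn in auto)
  have cz': "is_circle E ends (insert h (set es))"
    by (rule circle_mono[OF cz[simplified]]) (use ZE h(1) is_path_set[OF p(1)] in auto)
  have "insert h (set es) = Z"
    by (rule circle_subset_eq[OF cz' c]) (use h(1) is_path_set[OF p(1)] in auto)
  moreover have "ends h = {last vs, x}" using u ux y_def by auto
  ultimately show ?thesis using p(1,2) esne h(1) hn by blast
qed

lemma take_drop_inter: "distinct xs \<Longrightarrow> k < length xs \<Longrightarrow> set (take (Suc k) xs) \<inter> set (drop k xs) = {xs ! k}"
proof -
  assume d: "distinct xs" and k: "k < length xs"
  have t: "take (Suc k) xs = take k xs @ [xs ! k]" using k by (simp add: take_Suc_conv_app_nth)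
  have dr: "drop k xs = xs ! k # drop (Suc k) xs" using k by (simp add: Cons_nth_drop_Suc)
  have "set (take k xs) \<inter> set (drop k xs) = {}" using d by (simp add: set_take_disj_set_drop_if_distinct)
  moreover have "xs ! k \<notin> set (drop (Suc k) xs)" using d dr by (metis distinct.simps(2) distinct_drop)
  ultimately show ?thesis using t dr by auto
qed

lemma circle_split:
  assumes G: "graph V E ends" and c: "is_circle E ends Z" and x: "x \<in> verts_of ends Z"
    and y: "y \<in> verts_of ends Z" and xy: "x \<noteq> y"
  shows "\<exists>vs1 es1 vs2 es2. is_path Z ends vs1 es1 \<and> is_path Z ends vs2 es2 \<and> hd vs1 = x \<and> hd vs2 = x
     \<and> last vs1 = y \<and> last vs2 = y \<and> set vs1 \<inter> set vs2 = {x, y} \<and> set es1 \<inter> set es2 = {}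
     \<and> set es1 \<union> set es2 = Z"
proof -
  obtain vs es h where cy: "is_path Z ends vs es" "es \<noteq> []" "hd vs = x" "h \<in> Z" "h \<notin> set es"
    "ends h = {last vs, x}" "Z = insert h (set es)" using circle_cyc[OF G c x] by blast
  define n where "n = length es"
  have lv: "length vs = Suc n" using is_path_len[OF cy(1)] n_def by simp
  have dv: "distinct vs" using is_path_distinct[OF cy(1)] .
  have de: "distinct es" using is_path_distinct_es[OF cy(1)] .
  have x0: "vs ! 0 = x" using is_path_hd[OF cy(1)] cy(3) by simp
  have vZ: "verts_of ends Z = set vs"
  proof -
    have "verts_of ends Z = ends h \<union> verts_of ends (set es)" using cy(7) by (auto simp: verts_of_def)
    also have "\<dots> = set vs" using is_path_verts[OF cy(1,2)] cy(6) cy(3) is_path_ne[OF cy(1)] by auto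
    finally show ?thesis .
  qed
  then obtain k where k: "k < Suc n" "vs ! k = y" using y lv by (metis in_set_conv_nth)
  have k0: "k \<noteq> 0"
  proof
    assume "k = 0" then show False using k x0 xy by simp
  qed
  have n0: "0 < n" using cy(2) n_def by simp
  define vn where "vn = last vs"
  have vnn: "vn = vs ! n" using is_path_last[OF cy(1)] n_def vn_def by simp
  have xvn: "x \<noteq> vn"
  proof
    assume "x = vn"
    then have "vs ! 0 = vs ! n" using x0 vnn by simp
    then have "0 = n" using dv lv by (simp add: nth_eq_iff_index_eq)
    then show False using n0 by simp
  qed
  have P1: "is_path Z ends (take (Suc k) vs) (take k es)" using is_path_take[OF cy(1)] k n_def by simp
  have h1: "hd (take (Suc k) vs) = x" using cy(3) lv by (cases vs) auto
  have l1: "last (take (Suc k) vs) = y" using k lv by (simp add: take_Suc_conv_app_nth)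
  have Pd: "is_path Z ends (drop k vs) (drop k es)" using is_path_drop[OF cy(1)] k n_def by simp
  have Pr: "is_path Z ends (rev (drop k vs)) (rev (drop k es))" using is_path_rev[OF Pd] .
  have Ph: "is_path Z ends [x, vn] [h]" using cy(4,6) xvn vn_def by (simp add: is_path_two insert_commute)
  have hdr: "hd (rev (drop k vs)) = vn" using k lv vn_def by (simp add: hd_rev)
  have xd: "x \<notin> set (drop k vs)"
  proof
    assume "x \<in> set (drop k vs)"
    then obtain i where "i < length (drop k vs)" "drop k vs ! i = x" by (metis in_set_conv_nth)
    then have "vs ! (k + i) = vs ! 0" using x0 k lv by simp
    then show False using dv k0 lv \<open>i < length (drop k vs)\<close> by (simp add: nth_eq_iff_index_eq)
  qed
  have P2: "is_path Z ends ([x, vn] @ tl (rev (drop k vs))) ([h] @ rev (drop k es))"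
    by (rule is_path_append[OF Ph Pr]) (use hdr xd in auto)
  have rne: "rev (drop k vs) \<noteq> []" using k lv by simp
  have h2: "hd ([x, vn] @ tl (rev (drop k vs))) = x" by simp
  have l2: "last ([x, vn] @ tl (rev (drop k vs))) = y"
  proof -
    have lr: "last (rev (drop k vs)) = y" using k lv by (simp add: last_rev hd_drop_conv_nth)
    show ?thesis
    proof (cases "tl (rev (drop k vs)) = []")
      case True
      then have "rev (drop k vs) = [vn]" using rne hdr by (metis list.collapse)
      then show ?thesis using lr by simp
    next
      case False
      then show ?thesis using lr rne by (metis last_appendR last_tl)
    qed
  qed
  have s2: "set ([x, vn] @ tl (rev (drop k vs))) = insert x (set (drop k vs))"
  proof -
    have "set (rev (drop k vs)) = insert vn (set (tl (rev (drop k vs))))" using rne hdr by (metis list.collapse list.simps(15))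
    then show ?thesis by auto
  qed
  have vi: "set (take (Suc k) vs) \<inter> set ([x, vn] @ tl (rev (drop k vs))) = {x, y}"
  proof -
    have "set (take (Suc k) vs) \<inter> set (drop k vs) = {y}" using take_drop_inter[OF dv, of k] k lv by simp
    moreover have "x \<in> set (take (Suc k) vs)" using x0 lv by (metis hd_in_set h1 take_eq_Nil nat.distinct(1) list.size(3) lv)
    ultimately show ?thesis using s2 by auto
  qed
  have ei: "set (take k es) \<inter> set ([h] @ rev (drop k es)) = {}"
    using cy(5) de by (auto simp: set_take_disj_set_drop_if_distinct dest: in_set_takeD)
  have eu: "set (take k es) \<union> set ([h] @ rev (drop k es)) = Z"
  proof -
    have "set (take k es) \<union> set (drop k es) = set es" by (metis set_append append_take_drop_id)
    then show ?thesis using cy(7) by auto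
  qed
  show ?thesis using P1 P2 h1 h2 l1 l2 vi ei eu by blast
qed


definition adjD :: "('e \<Rightarrow> 'v set) \<Rightarrow> 'e set \<Rightarrow> 'v \<Rightarrow> 'v \<Rightarrow> bool" where
  "adjD ends D a b \<longleftrightarrow> (\<exists>g\<in>D. ends g = {a, b})"

lemma adjD_sym: "adjD ends D a b \<Longrightarrow> adjD ends D b a"
  by (auto simp: adjD_def insert_commute)

lemma rtrancl_path_succ: "rtrancl_path r x xs y \<Longrightarrow> successively r (x # xs) \<and> last (x # xs) = y"
proof (induction rule: rtrancl_path.induct)
  case (base x) then show ?case by simp
next
  case (step x y ys z)
  then show ?case by (cases ys) auto
qed

lemma rtrancl_path_set: "rtrancl_path r x xs y \<Longrightarrow> (\<forall>a b. r a b \<longrightarrow> b \<in> B) \<Longrightarrow> set xs \<subseteq> B"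
  by (induction rule: rtrancl_path.induct) auto

lemma rt_to_vpath:
  assumes "(s, t) \<in> R\<^sup>*"
  shows "\<exists>vs. vpath (\<lambda>a b. (a, b) \<in> R) vs \<and> hd vs = s \<and> last vs = t \<and> set vs \<subseteq> insert s (Range R)"
proof -
  have "(\<lambda>a b. (a, b) \<in> R)\<^sup>*\<^sup>* s t" using assms by (simp add: rtranclp_rtrancl_eq)
  then obtain xs where "rtrancl_path (\<lambda>a b. (a, b) \<in> R) s xs t" by (auto simp: rtranclp_eq_rtrancl_path)
  then obtain ys where ys: "rtrancl_path (\<lambda>a b. (a, b) \<in> R) s ys t" "distinct (s # ys)"
    by (meson rtrancl_path_distinct)
  have "set ys \<subseteq> Range R" using rtrancl_path_set[OF ys(1), of "Range R"] by blast
  then show ?thesis using rtrancl_path_succ[OF ys(1)] ys(2)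
    by (intro exI[of _ "s # ys"]) (auto simp: vpath_def)
qed

lemma vpath_mono: "vpath r vs \<Longrightarrow> (\<And>a b. r a b \<Longrightarrow> r' a b) \<Longrightarrow> vpath r' vs"
  unfolding vpath_def by (auto intro: successively_mono)

lemma successively_conj: "successively P xs \<Longrightarrow> successively Q xs \<Longrightarrow> successively (\<lambda>a b. P a b \<and> Q a b) xs"
  by (induction xs rule: induct_list012) auto

lemma succ_notlast: "distinct xs \<Longrightarrow> (\<forall>v\<in>set xs. v \<in> T \<longrightarrow> v = last xs) \<Longrightarrow> successively (\<lambda>a b. a \<notin> T) xs"
proof (induction xs rule: induct_list012)
  case 1 then show ?case by simp
next
  case (2 x) then show ?case by simp
next
  case (3 x y xs)
  have "x \<noteq> last (x # y # xs)" using 3(3) by (metis distinct.simps(2) last.simps last_in_set list.distinct(1))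
  then have "x \<notin> T" using 3(4) by auto
  moreover have "successively (\<lambda>a b. a \<notin> T) (y # xs)" using 3(2,3,4) by auto
  ultimately show ?case by simp
qed

lemma succ_nothd: "distinct xs \<Longrightarrow> (\<forall>v\<in>set xs. v \<in> S \<longrightarrow> v = hd xs) \<Longrightarrow> successively (\<lambda>a b. b \<notin> S) xs"
proof (induction xs rule: induct_list012)
  case 1 then show ?case by simp
next
  case (2 x) then show ?case by simp
next
  case (3 x y xs)
  have "y \<noteq> x" using 3(3) by auto
  then have "y \<notin> S" using 3(4) by auto
  moreover have "\<forall>v\<in>set (y # xs). v \<in> S \<longrightarrow> v = hd (y # xs)" using 3(3,4) by auto
  then have "successively (\<lambda>a b. b \<notin> S) (y # xs)" using 3(2,3) by auto
  ultimately show ?case by simp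
qed

lemma vpath_rev_adj: "vpath (adjD ends D) vs \<Longrightarrow> vpath (adjD ends D) (rev vs)"
  unfolding vpath_def by (auto simp: successively_rev intro: successively_mono adjD_sym)

lemma vpath_to_path: "vpath (adjD ends D) vs \<Longrightarrow> \<exists>es. is_path D ends vs es"
proof (induction vs rule: induct_list012)
  case 1 then show ?case by (simp add: vpath_def)
next
  case (2 x) then show ?case by (intro exI[of _ "[]"]) simp
next
  case (3 x y xs)
  have v: "vpath (adjD ends D) (y # xs)" using 3(3) by (simp add: vpath_def)
  obtain es where es: "is_path D ends (y # xs) es" using 3(2)[OF v] by blast
  obtain g where g: "g \<in> D" "ends g = {x, y}" using 3(3) by (auto simp: vpath_def adjD_def)
  have "x \<notin> set (y # xs)" using 3(3) by (simp add: vpath_def)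
  then show ?case using es g by (intro exI[of _ "g # es"]) (simp add: is_path_Cons2)
qed

lemma trunc:
  assumes "vpath r vs" "hd vs \<in> S" "last vs \<in> T"
  shows "\<exists>ws. vpath r ws \<and> hd ws \<in> S \<and> last ws \<in> T \<and> set ws \<subseteq> set vs
     \<and> (\<forall>v\<in>set ws. v \<in> S \<longrightarrow> v = hd ws) \<and> (\<forall>v\<in>set ws. v \<in> T \<longrightarrow> v = last ws)"
proof -
  have "\<exists>z\<in>set vs. z \<in> T" using assms by (metis last_in_set vpath_def)
  then obtain a t b where vs: "vs = a @ t # b" and t: "t \<in> T" and a: "\<forall>y\<in>set a. y \<notin> T"
    using split_list_first_prop[of vs "\<lambda>z. z \<in> T"] by blast
  define p where "p = a @ [t]"
  have pv: "vpath r p" using vpath_prefix[of r "a @ [t]" b] assms(1) vs p_def by simp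
  have hp: "hd p \<in> S" using assms(2) vs p_def by (cases a) auto
  then have "\<exists>z\<in>set p. z \<in> S" using pv by (metis hd_in_set vpath_def)
  then obtain c s d where p: "p = c @ s # d" and s: "s \<in> S" and d: "\<forall>y\<in>set d. y \<notin> S"
    using split_list_last_prop[of p "\<lambda>z. z \<in> S"] by blast
  define ws where "ws = s # d"
  have wv: "vpath r ws" using vpath_suffix[of r c "s # d"] pv p ws_def by simp
  have lw: "last ws = t" using p p_def ws_def by (metis last_appendR last_snoc list.distinct(1))
  have sub: "set ws \<subseteq> set p" using p ws_def by auto
  have subv: "set ws \<subseteq> set vs" using sub vs p_def by auto
  have c1: "\<forall>v\<in>set ws. v \<in> S \<longrightarrow> v = hd ws" using d ws_def by auto
  have c2: "\<forall>v\<in>set ws. v \<in> T \<longrightarrow> v = last ws" using sub a lw p_def by auto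
  show ?thesis using wv s ws_def lw t subv c1 c2 by (intro exI[of _ ws]) auto
qed


lemma last_app_tl: "ys \<noteq> [] \<Longrightarrow> xs \<noteq> [] \<Longrightarrow> last xs = hd ys \<Longrightarrow> last (xs @ tl ys) = last ys"
  by (cases ys) auto

locale ctx =
  fixes V :: "'v set" and E :: "'e set" and ends :: "'e \<Rightarrow> 'v set" and \<sigma> :: "'e \<Rightarrow> int"
    and e :: 'e and C :: "'e set"
  assumes sg: "signed_graph V E ends \<sigma>" and blk: "is_block V E ends"
    and nbc: "neg_battery_circ E ends \<sigma> e C"
begin

lemma G: "graph V E ends" using sg by (simp add: signed_graph_def)
lemma sig: "g \<in> E \<Longrightarrow> \<sigma> g = 1 \<or> \<sigma> g = -1" using sg by (simp add: signed_graph_def)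
lemma Cc: "is_circle E ends C" "circ_sign \<sigma> C = -1" "e \<in> C" using nbc by (auto simp: neg_battery_circ_def)
lemma Cuniq: "is_circle E ends Z \<Longrightarrow> circ_sign \<sigma> Z = -1 \<Longrightarrow> e \<in> Z \<Longrightarrow> Z = C"
  using nbc by (auto simp: neg_battery_circ_def)
lemma CE: "C \<subseteq> E" "finite C" using Cc(1) by (auto simp: is_circle_def)
lemma fE: "finite E" using G by (simp add: graph_def)
lemma endsV: "g \<in> E \<Longrightarrow> ends g \<subseteq> V" using G by (simp add: graph_def)

abbreviation VC where "VC \<equiv> verts_of ends C"

lemma ends_VC: "g \<in> C \<Longrightarrow> ends g \<subseteq> VC" by (auto simp: verts_of_def)
lemma VCV: "VC \<subseteq> V" using CE endsV by (auto simp: verts_of_def)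

lemma circle_pm: "is_circle E ends Z \<Longrightarrow> circ_sign \<sigma> Z = 1 \<or> circ_sign \<sigma> Z = -1"
proof -
  assume "is_circle E ends Z"
  then have "finite Z" "Z \<subseteq> E" by (auto simp: is_circle_def)
  then show ?thesis using sig by (intro sign_pm) auto
qed

lemma adj_notC: "adjD ends E a b \<Longrightarrow> a \<notin> VC \<Longrightarrow> adjD ends (E - C) a b"
  unfolding adjD_def using ends_VC by blast

definition ear :: "'v list \<Rightarrow> 'e list \<Rightarrow> bool" where
  "ear vs es \<longleftrightarrow> is_path (E - C) ends vs es \<and> hd vs \<noteq> last vs \<and> hd vs \<in> VC \<and> last vs \<in> VC
     \<and> (\<forall>v\<in>set vs. v \<in> VC \<longrightarrow> v = hd vs \<or> v = last vs)"

lemma block_H: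
  assumes S: "S \<subseteq> V" "s1 \<in> S" "s2 \<in> S" "s1 \<noteq> s2" and T: "T \<subseteq> V" "t1 \<in> T" "t2 \<in> T" "t1 \<noteq> t2"
  shows "\<exists>vs. vpath (adjD ends E) vs \<and> hd vs \<in> S \<and> last vs \<in> T \<and> z \<notin> set vs"
proof -
  obtain s where s: "s \<in> S" "s \<noteq> z" using S by metis
  obtain t where t: "t \<in> T" "t \<noteq> z" using T by metis
  have sV: "s \<in> V" and tV: "t \<in> V" using s t S T by auto
  have mono: "\<And>X a b. (a, b) \<in> adj_avoid E ends X \<Longrightarrow> adjD ends E a b"
    by (auto simp: adj_avoid_def adjD_def)
  show ?thesis
  proof (cases "z \<in> V")
    case True
    then have "\<not> cutpoint V E ends z" using blk by (simp add: is_block_def)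
    then have "(s, t) \<in> (adj_avoid E ends {z})\<^sup>*" using True sV tV s t by (simp add: cutpoint_def)
    then obtain vs where vs: "vpath (\<lambda>a b. (a, b) \<in> adj_avoid E ends {z}) vs" "hd vs = s" "last vs = t"
      "set vs \<subseteq> insert s (Range (adj_avoid E ends {z}))" using rt_to_vpath by metis
    have "z \<notin> Range (adj_avoid E ends {z})" by (auto simp: adj_avoid_def)
    then have "z \<notin> set vs" using vs(4) s by auto
    moreover have "vpath (adjD ends E) vs" using vpath_mono[OF vs(1)] mono by blast
    ultimately show ?thesis using vs s t by blast
  next
    case False
    have "connected_graph V E ends" using blk by (simp add: is_block_def)
    then have "(s, t) \<in> (adj_avoid E ends {})\<^sup>*" using sV tV by (simp add: connected_graph_def)
    then obtain vs where vs: "vpath (\<lambda>a b. (a, b) \<in> adj_avoid E ends {}) vs" "hd vs = s" "last vs = t"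
      "set vs \<subseteq> insert s (Range (adj_avoid E ends {}))" using rt_to_vpath by metis
    have "Range (adj_avoid E ends {}) \<subseteq> V" using endsV by (auto simp: adj_avoid_def)
    then have "z \<notin> set vs" using vs(4) sV False by blast
    moreover have "vpath (adjD ends E) vs" using vpath_mono[OF vs(1)] mono by blast
    ultimately show ?thesis using vs s t by blast
  qed
qed

lemma two_disj_paths:
  assumes S: "S \<subseteq> V" "s1 \<in> S" "s2 \<in> S" "s1 \<noteq> s2" and T: "T \<subseteq> V" "t1 \<in> T" "t2 \<in> T" "t1 \<noteq> t2"
  obtains A B where "vpath (adjD ends E) A" "vpath (adjD ends E) B" "hd A \<in> S" "last A \<in> T" "hd B \<in> S"
    "last B \<in> T" "set A \<inter> set B = {}"
    "\<forall>v\<in>set A. v \<in> S \<longrightarrow> v = hd A" "\<forall>v\<in>set A. v \<in> T \<longrightarrow> v = last A"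
    "\<forall>v\<in>set B. v \<in> S \<longrightarrow> v = hd B" "\<forall>v\<in>set B. v \<in> T \<longrightarrow> v = last B"
proof -
  have rV: "\<And>a b. adjD ends E a b \<Longrightarrow> a \<in> V \<and> b \<in> V" using endsV by (auto simp: adjD_def)
  obtain A0 B0 where AB: "vpath (adjD ends E) A0" "vpath (adjD ends E) B0" "hd A0 \<in> S" "last A0 \<in> T"
    "hd B0 \<in> S" "last B0 \<in> T" "set A0 \<inter> set B0 = {}"
    using menger2[of V "adjD ends E" S T, OF _ rV block_H[OF S T]] G by (auto simp: graph_def)
  obtain A where A: "vpath (adjD ends E) A" "hd A \<in> S" "last A \<in> T" "set A \<subseteq> set A0"
    "\<forall>v\<in>set A. v \<in> S \<longrightarrow> v = hd A" "\<forall>v\<in>set A. v \<in> T \<longrightarrow> v = last A"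
    using trunc[OF AB(1,3,4)] by blast
  obtain B where B: "vpath (adjD ends E) B" "hd B \<in> S" "last B \<in> T" "set B \<subseteq> set B0"
    "\<forall>v\<in>set B. v \<in> S \<longrightarrow> v = hd B" "\<forall>v\<in>set B. v \<in> T \<longrightarrow> v = last B"
    using trunc[OF AB(2,5,6)] by blast
  have d: "set A \<inter> set B = {}" using AB(7) A(4) B(4) by blast
  show ?thesis by (rule that[OF A(1) B(1) A(2) A(3) B(2) B(3) d A(5) A(6) B(5) B(6)])
qed

end


context ctx begin

lemma path_ne_es: "is_path D ends vs es \<Longrightarrow> hd vs \<noteq> last vs \<Longrightarrow> es \<noteq> []"
proof
  assume p: "is_path D ends vs es" and h: "hd vs \<noteq> last vs" and "es = []"
  then obtain v where "vs = [v]" by auto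
  then show False using h by simp
qed

lemma ear_neg:
  assumes "ear vs es"
  shows "\<exists>Z. is_circle E ends Z \<and> circ_sign \<sigma> Z = -1 \<and> set es \<subseteq> Z \<and> Z - set es \<subseteq> C \<and> e \<notin> Z"
proof -
  have P: "is_path (E - C) ends vs es" and xy: "hd vs \<noteq> last vs" and x: "hd vs \<in> VC"
    and y: "last vs \<in> VC" and iv: "\<forall>v\<in>set vs. v \<in> VC \<longrightarrow> v = hd vs \<or> v = last vs"
    using assms by (auto simp: ear_def)
  have PE: "is_path E ends vs es" using is_path_mono[OF P] is_path_set[OF P] by blast
  have esC: "set es \<inter> C = {}" using is_path_set[OF P] by blast
  have esne: "es \<noteq> []" using path_ne_es[OF P xy] .
  obtain vs1 es1 vs2 es2 where sp: "is_path C ends vs1 es1" "is_path C ends vs2 es2" "hd vs1 = hd vs"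
    "hd vs2 = hd vs" "last vs1 = last vs" "last vs2 = last vs" "set vs1 \<inter> set vs2 = {hd vs, last vs}"
    "set es1 \<inter> set es2 = {}" "set es1 \<union> set es2 = C"
    using circle_split[OF G Cc(1) x y xy] by blast
  have circ: "\<And>vsc esc. is_path C ends vsc esc \<Longrightarrow> hd vsc = hd vs \<Longrightarrow> last vsc = last vs
      \<Longrightarrow> is_circle E ends (set es \<union> set esc)"
  proof -
    fix vsc esc assume c: "is_path C ends vsc esc" "hd vsc = hd vs" "last vsc = last vs"
    have cne: "esc \<noteq> []" using path_ne_es[OF c(1)] c(2,3) xy by simp
    have cE: "is_path E ends vsc esc" using is_path_mono[OF c(1)] is_path_set[OF c(1)] CE by blast
    have "set vsc \<subseteq> VC" using is_path_verts[OF c(1) cne] is_path_set[OF c(1)] by (auto simp: verts_of_def)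
    then have "set vs \<inter> set vsc \<subseteq> {hd vs, last vs}" using iv by blast
    moreover have "set es \<inter> set esc = {}" using esC is_path_set[OF c(1)] by blast
    ultimately show "is_circle E ends (set es \<union> set esc)"
      using two_paths_circle[OF PE cE] c xy by auto
  qed
  have key: "\<And>vsa esa vsb esb. is_path C ends vsa esa \<Longrightarrow> is_path C ends vsb esb \<Longrightarrow> hd vsa = hd vs
     \<Longrightarrow> hd vsb = hd vs \<Longrightarrow> last vsa = last vs \<Longrightarrow> last vsb = last vs \<Longrightarrow> set esa \<inter> set esb = {}
     \<Longrightarrow> set esa \<union> set esb = C \<Longrightarrow> e \<in> set esa
     \<Longrightarrow> \<exists>Z. is_circle E ends Z \<and> circ_sign \<sigma> Z = -1 \<and> set es \<subseteq> Z \<and> Z - set es \<subseteq> C \<and> e \<notin> Z"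
  proof -
    fix vsa esa vsb esb
    assume a: "is_path C ends vsa esa" and b: "is_path C ends vsb esb" and ha: "hd vsa = hd vs"
      and hb: "hd vsb = hd vs" and la: "last vsa = last vs" and lb: "last vsb = last vs"
      and dab: "set esa \<inter> set esb = {}" and uab: "set esa \<union> set esb = C" and ea: "e \<in> set esa"
    have Za: "is_circle E ends (set es \<union> set esa)" using circ[OF a ha la] .
    have Zb: "is_circle E ends (set es \<union> set esb)" using circ[OF b hb lb] .
    have sd: "((set es \<union> set esa) - (set es \<union> set esb)) \<union> ((set es \<union> set esb) - (set es \<union> set esa)) = C"
      using dab uab esC by blast
    have fin: "finite (set es \<union> set esa)" "finite (set es \<union> set esb)" by auto
    have pmE: "\<forall>g\<in>(set es \<union> set esa) \<inter> (set es \<union> set esb). \<sigma> g = 1 \<or> \<sigma> g = -1"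
      using Za sig by (auto simp: is_circle_def)
    have prod: "circ_sign \<sigma> (set es \<union> set esa) * circ_sign \<sigma> (set es \<union> set esb) = -1"
      using sign_symdiff[OF fin pmE] sd Cc(2) by simp
    have "circ_sign \<sigma> (set es \<union> set esa) \<noteq> -1"
    proof
      assume "circ_sign \<sigma> (set es \<union> set esa) = -1"
      then have "set es \<union> set esa = C" using Cuniq[OF Za] ea by blast
      then show False using esC esne by auto
    qed
    then have "circ_sign \<sigma> (set es \<union> set esa) = 1" using circle_pm[OF Za] by blast
    then have sb: "circ_sign \<sigma> (set es \<union> set esb) = -1" using prod by simp
    have "e \<notin> set es \<union> set esb" using ea dab esC Cc(3) by blast
    moreover have "(set es \<union> set esb) - set es \<subseteq> C" using uab by blast
    ultimately show "\<exists>Z. is_circle E ends Z \<and> circ_sign \<sigma> Z = -1 \<and> set es \<subseteq> Z \<and> Z - set es \<subseteq> C \<and> e \<notin> Z"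
      using Zb sb by blast
  qed
  have "e \<in> set es1 \<or> e \<in> set es2" using sp(9) Cc(3) by blast
  then show ?thesis
  proof
    assume "e \<in> set es1" then show ?thesis using key[OF sp(1) sp(2) sp(3) sp(4) sp(5) sp(6) sp(8) sp(9)] by blast
  next
    assume e2: "e \<in> set es2"
    have "set es2 \<inter> set es1 = {}" "set es2 \<union> set es1 = C" using sp(8,9) by blast+
    then show ?thesis using key[OF sp(2) sp(1) sp(4) sp(3) sp(6) sp(5)] e2 by blast
  qed
qed

lemma cvt_notlast:
  assumes "vpath (adjD ends E) X" "\<forall>v\<in>set X. v \<in> VC \<longrightarrow> v = last X"
  shows "vpath (adjD ends (E - C)) X"
proof -
  have "successively (\<lambda>a b. a \<notin> VC) X" using succ_notlast[of X VC] assms by (simp add: vpath_def)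
  then have "successively (\<lambda>a b. adjD ends E a b \<and> a \<notin> VC) X"
    using assms(1) successively_conj[of "adjD ends E" X] by (simp add: vpath_def)
  then have "successively (adjD ends (E - C)) X"
    by (rule successively_mono) (use adj_notC in blast)
  then show ?thesis using assms(1) by (simp add: vpath_def)
qed

lemma m1_build:
  assumes f: "f \<in> E" "f \<notin> C" "ends f = {p, q}" "p \<noteq> q"
    and A: "vpath (adjD ends E) A" "hd A = p" "last A \<in> VC" "q \<notin> set A" "\<forall>v\<in>set A. v \<in> VC \<longrightarrow> v = last A"
    and B: "vpath (adjD ends E) B" "hd B = q" "last B \<in> VC" "p \<notin> set B" "\<forall>v\<in>set B. v \<in> VC \<longrightarrow> v = last B"
    and AB: "set A \<inter> set B = {}"
  shows "\<exists>vs es. ear vs es \<and> f \<in> set es"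
proof -
  have Ane: "A \<noteq> []" "B \<noteq> []" using A(1) B(1) by (auto simp: vpath_def)
  have A': "vpath (adjD ends (E - C)) (rev A)" using vpath_rev_adj[OF cvt_notlast[OF A(1) A(5)]] .
  have B': "vpath (adjD ends (E - C)) B" using cvt_notlast[OF B(1) B(5)] .
  obtain esA where pA: "is_path (E - C) ends (rev A) esA" using vpath_to_path[OF A'] by blast
  obtain esB where pB: "is_path (E - C) ends B esB" using vpath_to_path[OF B'] by blast
  have pf: "is_path (E - C) ends [p, q] [f]" using f by (simp add: is_path_two)
  have X1: "is_path (E - C) ends (rev A @ tl [p, q]) (esA @ [f])"
    by (rule is_path_append[OF pA pf]) (use A(2,4) in \<open>auto simp: last_rev\<close>)
  have X1': "is_path (E - C) ends (rev A @ [q]) (esA @ [f])" using X1 by simp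
  have X2: "is_path (E - C) ends ((rev A @ [q]) @ tl B) ((esA @ [f]) @ esB)"
    by (rule is_path_append[OF X1' pB]) (use B(2) AB in auto)
  define vs where "vs = (rev A @ [q]) @ tl B"
  have hv: "hd vs = last A" using Ane by (simp add: vs_def hd_rev)
  have lv: "last vs = last B" unfolding vs_def by (rule last_app_tl) (use Ane B(2) in auto)
  have sv: "set vs = set A \<union> set B"
  proof -
    have "set B = insert q (set (tl B))" using Ane(2) B(2) by (metis list.collapse list.simps(15))
    then show ?thesis by (auto simp: vs_def)
  qed
  have "last A \<in> set A" "last B \<in> set B" using Ane by auto
  then have "last A \<noteq> last B" using AB by (metis IntI empty_iff)
  moreover have "\<forall>v\<in>set vs. v \<in> VC \<longrightarrow> v = hd vs \<or> v = last vs" using sv A(5) B(5) hv lv by auto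
  moreover have "is_path (E - C) ends vs ((esA @ [f]) @ esB)" using X2 vs_def by simp
  ultimately have "ear vs ((esA @ [f]) @ esB)"
    unfolding ear_def using hv lv A(3) B(3) by simp
  then show ?thesis by (intro exI[of _ vs] exI[of _ "(esA @ [f]) @ esB"]) simp
qed

lemma e_ends: obtains u v where "ends e = {u, v}" "u \<noteq> v"
proof -
  have "e \<in> E" using Cc(3) CE(1) by blast
  then have "card (ends e) = 2" using G by (simp add: graph_def)
  then show ?thesis using that unfolding card_2_iff by blast
qed

lemma M1:
  assumes f: "f \<in> E" "f \<notin> C"
  shows "\<exists>vs es. ear vs es \<and> f \<in> set es"
proof -
  obtain p q where pq: "ends f = {p, q}" "p \<noteq> q"
  proof -
    have "card (ends f) = 2" using G f by (simp add: graph_def)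
    then show ?thesis using that unfolding card_2_iff by blast
  qed
  obtain u v where uv: "ends e = {u, v}" "u \<noteq> v" by (rule e_ends)
  have uvC: "u \<in> VC" "v \<in> VC" using ends_VC[OF Cc(3)] uv by auto
  have SV: "{p, q} \<subseteq> V" using endsV[OF f(1)] pq by simp
  obtain A B where AB: "vpath (adjD ends E) A" "vpath (adjD ends E) B" "hd A \<in> {p, q}" "last A \<in> VC"
    "hd B \<in> {p, q}" "last B \<in> VC" "set A \<inter> set B = {}"
    "\<forall>v\<in>set A. v \<in> {p, q} \<longrightarrow> v = hd A" "\<forall>v\<in>set A. v \<in> VC \<longrightarrow> v = last A"
    "\<forall>v\<in>set B. v \<in> {p, q} \<longrightarrow> v = hd B" "\<forall>v\<in>set B. v \<in> VC \<longrightarrow> v = last B"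
    by (rule two_disj_paths[OF SV insertI1 insertI2[OF singletonI] pq(2) VCV uvC uv(2)])
  have "hd A \<in> set A" "hd B \<in> set B" using AB(1,2) by (auto simp: vpath_def)
  then have hAB: "hd A \<noteq> hd B" using AB(7) by (metis IntI empty_iff)
  show ?thesis
  proof (cases "hd A = p")
    case True
    then have hB: "hd B = q" using AB(5) hAB by auto
    have "q \<notin> set A" using AB(8) True pq(2) by auto
    moreover have "p \<notin> set B" using AB(10) hB pq(2) by auto
    ultimately show ?thesis using m1_build[OF f pq AB(1) True AB(4) _ AB(9) AB(2) hB AB(6) _ AB(11) AB(7)] by blast
  next
    case False
    then have hA: "hd A = q" using AB(3) by auto
    then have hB: "hd B = p" using AB(5) hAB by auto
    have "p \<notin> set A" using AB(8) hA pq(2) by auto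
    moreover have "q \<notin> set B" using AB(10) hB pq(2) by auto
    moreover have "set B \<inter> set A = {}" using AB(7) by (simp add: Int_commute)
    ultimately show ?thesis using m1_build[OF f pq AB(2) hB AB(6) _ AB(11) AB(1) hA AB(4) _ AB(9)] by blast
  qed
qed

end


lemma set_tl_sub: "set (tl xs) \<subseteq> set xs" by (cases xs) auto

context ctx begin

lemma m2_finish:
  assumes Z: "is_circle E ends Z" "f \<in> Z" "f \<notin> C"
    and a: "is_path Z ends vsa esa" and b: "is_path Z ends vsb esb"
    and hl: "hd vsa = t1" "hd vsb = t1" "last vsa = t2" "last vsb = t2" "t1 \<noteq> t2"
    and iab: "set vsa \<inter> set vsb = {t1, t2}" and dab: "set esa \<inter> set esb = {}"
    and uab: "set esa \<union> set esb = Z"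
    and Cw: "C = X \<union> set esa" and XZ: "X \<inter> Z = {}"
    and VCs: "VC \<subseteq> set A \<union> set vsa \<union> set B"
    and AZ: "\<forall>v\<in>set A. v \<in> verts_of ends Z \<longrightarrow> v = t1"
    and BZ: "\<forall>v\<in>set B. v \<in> verts_of ends Z \<longrightarrow> v = t2"
  shows "ear vsb esb \<and> f \<in> set esb \<and> set esb \<subseteq> Z \<and> Z - set esb \<subseteq> C"
proof -
  have ZE: "Z \<subseteq> E" using Z(1) by (simp add: is_circle_def)
  have bZ: "set esb \<subseteq> Z" using is_path_set[OF b] .
  have aZ: "set esa \<subseteq> Z" using is_path_set[OF a] .
  have bC: "set esb \<inter> C = {}" using Cw XZ bZ dab by blast
  have pb: "is_path (E - C) ends vsb esb" using is_path_mono[OF b] bZ ZE bC by blast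
  have aC: "set esa \<subseteq> C" using Cw by blast
  have ane: "esa \<noteq> []" using path_ne_es[OF a] hl by simp
  have bne: "esb \<noteq> []" using path_ne_es[OF b] hl by simp
  have vsbZ: "set vsb \<subseteq> verts_of ends Z" using is_path_verts[OF b bne] bZ by (auto simp: verts_of_def)
  have vsaC: "set vsa \<subseteq> VC" using is_path_verts[OF a ane] aC by (auto simp: verts_of_def)
  have t1C: "t1 \<in> VC" and t2C: "t2 \<in> VC" using vsaC hl is_path_ne[OF a] by auto
  have int: "\<forall>v\<in>set vsb. v \<in> VC \<longrightarrow> v = hd vsb \<or> v = last vsb"
  proof (intro ballI impI)
    fix v assume v: "v \<in> set vsb" "v \<in> VC"
    then have "v \<in> set A \<or> v \<in> set vsa \<or> v \<in> set B" using VCs by blast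
    moreover have "v \<in> verts_of ends Z" using v vsbZ by blast
    ultimately have "v = t1 \<or> v = t2" using AZ BZ iab v(1) by blast
    then show "v = hd vsb \<or> v = last vsb" using hl by simp
  qed
  have "ear vsb esb" unfolding ear_def using pb hl t1C t2C int by simp
  moreover have "f \<in> set esb" using Z(2,3) uab aC by blast
  moreover have "Z - set esb \<subseteq> C" using uab aC by blast
  ultimately show ?thesis using bZ by blast
qed

lemma cvt_m2:
  assumes "vpath (adjD ends E) X" "\<forall>v\<in>set X. v \<in> verts_of ends Z \<longrightarrow> v = last X"
    "\<forall>v\<in>set X. v \<in> ends e \<longrightarrow> v = hd X"
  shows "vpath (adjD ends (E - Z - {e})) X"
proof -
  have d: "distinct X" using assms(1) by (simp add: vpath_def)
  have s1: "successively (\<lambda>a b. a \<notin> verts_of ends Z) X" using succ_notlast[OF d assms(2)] .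
  have s2: "successively (\<lambda>a b. b \<notin> ends e) X" using succ_nothd[OF d assms(3)] .
  have "successively (\<lambda>a b. adjD ends E a b \<and> a \<notin> verts_of ends Z) X"
    using assms(1) s1 successively_conj[of "adjD ends E" X] by (simp add: vpath_def)
  then have "successively (\<lambda>a b. (adjD ends E a b \<and> a \<notin> verts_of ends Z) \<and> b \<notin> ends e) X"
    using s2 successively_conj by blast
  then have "successively (adjD ends (E - Z - {e})) X"
    by (rule successively_mono) (auto simp: adjD_def verts_of_def)
  then show ?thesis using assms(1) by (simp add: vpath_def)
qed

lemma m2_core:
  assumes Z: "is_circle E ends Z" "circ_sign \<sigma> Z = -1" "f \<in> Z" "f \<notin> C" and eZ: "e \<notin> Z"
    and uv: "ends e = {u, v}" "u \<noteq> v"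
    and A: "vpath (adjD ends E) A" "hd A = u" "last A \<in> verts_of ends Z" "v \<notin> set A"
      "\<forall>x\<in>set A. x \<in> verts_of ends Z \<longrightarrow> x = last A"
    and B: "vpath (adjD ends E) B" "hd B = v" "last B \<in> verts_of ends Z" "u \<notin> set B"
      "\<forall>x\<in>set B. x \<in> verts_of ends Z \<longrightarrow> x = last B"
    and AB: "set A \<inter> set B = {}"
  shows "\<exists>vs es. ear vs es \<and> f \<in> set es \<and> set es \<subseteq> Z \<and> Z - set es \<subseteq> C"
proof -
  have ZE: "Z \<subseteq> E" "finite Z" using Z(1) by (auto simp: is_circle_def)
  have Ane: "A \<noteq> []" and Bne: "B \<noteq> []" using A(1) B(1) by (auto simp: vpath_def)
  define t1 where "t1 = last A"
  define t2 where "t2 = last B"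
  have t12: "t1 \<noteq> t2" using AB Ane Bne unfolding t1_def t2_def by (metis IntI empty_iff last_in_set)
  have Ae: "\<forall>x\<in>set A. x \<in> ends e \<longrightarrow> x = hd A" using A(2,4) uv by auto
  have Be: "\<forall>x\<in>set B. x \<in> ends e \<longrightarrow> x = hd B" using B(2,4) uv by auto
  have A': "vpath (adjD ends (E - Z - {e})) A" using cvt_m2[OF A(1) A(5) Ae] .
  have B': "vpath (adjD ends (E - Z - {e})) (rev B)" using vpath_rev_adj[OF cvt_m2[OF B(1) B(5) Be]] .
  obtain esA where pA: "is_path (E - Z - {e}) ends A esA" using vpath_to_path[OF A'] by blast
  obtain esB where pB: "is_path (E - Z - {e}) ends (rev B) esB" using vpath_to_path[OF B'] by blast
  have pAE: "is_path E ends A esA" using is_path_mono[OF pA] is_path_set[OF pA] by blast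
  have pBE: "is_path E ends (rev B) esB" using is_path_mono[OF pB] is_path_set[OF pB] by blast
  obtain vs1 es1 vs2 es2 where sp: "is_path Z ends vs1 es1" "is_path Z ends vs2 es2" "hd vs1 = t1"
    "hd vs2 = t1" "last vs1 = t2" "last vs2 = t2" "set vs1 \<inter> set vs2 = {t1, t2}"
    "set es1 \<inter> set es2 = {}" "set es1 \<union> set es2 = Z"
    using circle_split[OF G Z(1) A(3)[folded t1_def] B(3)[folded t2_def] t12] by blast
  have pe: "is_path E ends [u, v] [e]" using uv Cc(3) CE(1) by (auto simp: is_path_two)
  define X where "X = set esA \<union> set esB \<union> {e}"
  have XZ: "X \<inter> Z = {}" using is_path_set[OF pA] is_path_set[OF pB] eZ unfolding X_def by blast
  have build: "\<And>vsc esc. is_path Z ends vsc esc \<Longrightarrow> hd vsc = t1 \<Longrightarrow> last vsc = t2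
     \<Longrightarrow> is_circle E ends (X \<union> set esc) \<and> verts_of ends (X \<union> set esc) \<subseteq> set A \<union> set vsc \<union> set B"
  proof -
    fix vsc esc assume c: "is_path Z ends vsc esc" "hd vsc = t1" "last vsc = t2"
    have cne: "esc \<noteq> []" using path_ne_es[OF c(1)] c(2,3) t12 by simp
    have vscZ: "set vsc \<subseteq> verts_of ends Z" using is_path_verts[OF c(1) cne] is_path_set[OF c(1)] by (auto simp: verts_of_def)
    have cE: "is_path E ends vsc esc" using is_path_mono[OF c(1)] is_path_set[OF c(1)] ZE by blast
    have Q1: "is_path E ends (A @ tl vsc) (esA @ esc)"
      by (rule is_path_append[OF pAE cE]) (use c(2) t1_def A(5) vscZ in auto)
    have vcne: "vsc \<noteq> []" using is_path_ne[OF c(1)] .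
    have lQ1: "last (A @ tl vsc) = t2" using last_app_tl[OF vcne Ane] c(2,3) t1_def by simp
    have Q2: "is_path E ends ((A @ tl vsc) @ tl (rev B)) ((esA @ esc) @ esB)"
    proof (rule is_path_append[OF Q1 pBE])
      show "last (A @ tl vsc) = hd (rev B)" using lQ1 t2_def by (simp add: hd_rev)
      have "set (A @ tl vsc) \<subseteq> set A \<union> set vsc" by (auto dest: list.set_sel(2)[OF vcne])
      moreover have "set vsc \<inter> set B \<subseteq> {t2}" using vscZ B(5) t2_def by auto
      ultimately show "set (A @ tl vsc) \<inter> set (rev B) \<subseteq> {hd (rev B)}" using AB t2_def by (auto simp: hd_rev)
    qed
    define Qv where "Qv = (A @ tl vsc) @ tl (rev B)"
    define Qe where "Qe = (esA @ esc) @ esB"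
    have hQ: "hd Qv = u" using Ane A(2) by (simp add: Qv_def)
    have lQ: "last Qv = v"
    proof -
      have "last Qv = last (rev B)" unfolding Qv_def
        by (rule last_app_tl) (use Bne vcne lQ1 t2_def Ane in \<open>auto simp: hd_rev\<close>)
      then show ?thesis using B(2) by (simp add: last_rev)
    qed
    have QP: "is_path E ends Qv Qe" using Q2 Qv_def Qe_def by simp
    have ei: "set Qe \<inter> set [e] = {}" using is_path_set[OF pA] is_path_set[OF pB] is_path_set[OF c(1)] eZ
      unfolding Qe_def by auto
    have circ: "is_circle E ends (set Qe \<union> set [e])"
      by (rule two_paths_circle[OF QP pe]) (use hQ lQ uv ei in auto)
    have eq: "set Qe \<union> set [e] = X \<union> set esc" unfolding Qe_def X_def by auto
    have Qene: "Qe \<noteq> []" using Qe_def cne by simp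
    have "verts_of ends (set Qe \<union> set [e]) = set Qv \<union> ends e"
      using is_path_verts[OF QP Qene] by (auto simp: verts_of_def)
    moreover have "set Qv \<subseteq> set A \<union> set vsc \<union> set B" unfolding Qv_def
      using set_tl_sub[of vsc] set_tl_sub[of "rev B"] by auto
    moreover have "ends e \<subseteq> set A \<union> set B" using uv A(2) B(2) Ane Bne by auto
    ultimately show "is_circle E ends (X \<union> set esc) \<and> verts_of ends (X \<union> set esc) \<subseteq> set A \<union> set vsc \<union> set B"
      using circ eq by auto
  qed
  obtain W1: "is_circle E ends (X \<union> set es1)" "verts_of ends (X \<union> set es1) \<subseteq> set A \<union> set vs1 \<union> set B"
    using build[OF sp(1) sp(3) sp(5)] by blast
  obtain W2: "is_circle E ends (X \<union> set es2)" "verts_of ends (X \<union> set es2) \<subseteq> set A \<union> set vs2 \<union> set B"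
    using build[OF sp(2) sp(4) sp(6)] by blast
  have sd: "((X \<union> set es1) - (X \<union> set es2)) \<union> ((X \<union> set es2) - (X \<union> set es1)) = Z"
    using sp(8,9) XZ by blast
  have fin: "finite (X \<union> set es1)" "finite (X \<union> set es2)" using W1(1) W2(1) by (auto simp: is_circle_def)
  have pmE: "\<forall>g\<in>(X \<union> set es1) \<inter> (X \<union> set es2). \<sigma> g = 1 \<or> \<sigma> g = -1"
    using W1(1) sig by (auto simp: is_circle_def)
  have prod: "circ_sign \<sigma> (X \<union> set es1) * circ_sign \<sigma> (X \<union> set es2) = -1"
    using sign_symdiff[OF fin pmE] sd Z(2) by simp
  have eX: "e \<in> X" by (simp add: X_def)
  have AZ: "\<forall>x\<in>set A. x \<in> verts_of ends Z \<longrightarrow> x = t1" using A(5) t1_def by simp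
  have BZ: "\<forall>x\<in>set B. x \<in> verts_of ends Z \<longrightarrow> x = t2" using B(5) t2_def by simp
  show ?thesis
  proof (cases "circ_sign \<sigma> (X \<union> set es1) = -1")
    case True
    then have C1: "C = X \<union> set es1" using Cuniq[OF W1(1)] eX by auto
    have "ear vs2 es2 \<and> f \<in> set es2 \<and> set es2 \<subseteq> Z \<and> Z - set es2 \<subseteq> C"
      by (rule m2_finish[OF Z(1,3,4) sp(1) sp(2) sp(3) sp(4) sp(5) sp(6) t12 sp(7) sp(8) sp(9) C1 XZ _ AZ BZ])
        (use W1(2) C1 in simp)
    then show ?thesis by blast
  next
    case False
    then have "circ_sign \<sigma> (X \<union> set es1) = 1" using circle_pm[OF W1(1)] by blast
    then have "circ_sign \<sigma> (X \<union> set es2) = -1" using prod by simp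
    then have C2: "C = X \<union> set es2" using Cuniq[OF W2(1)] eX by auto
    have i21: "set vs2 \<inter> set vs1 = {t1, t2}" using sp(7) by (simp add: Int_commute)
    have d21: "set es2 \<inter> set es1 = {}" using sp(8) by (simp add: Int_commute)
    have u21: "set es2 \<union> set es1 = Z" using sp(9) by (simp add: Un_commute)
    have "ear vs1 es1 \<and> f \<in> set es1 \<and> set es1 \<subseteq> Z \<and> Z - set es1 \<subseteq> C"
      by (rule m2_finish[OF Z(1,3,4) sp(2) sp(1) sp(4) sp(3) sp(6) sp(5) t12 i21 d21 u21 C2 XZ _ AZ BZ])
        (use W2(2) C2 in simp)
    then show ?thesis by blast
  qed
qed

end


context ctx begin

lemma neg_not_e: "is_circle E ends Z \<Longrightarrow> circ_sign \<sigma> Z = -1 \<Longrightarrow> f \<in> Z \<Longrightarrow> f \<notin> C \<Longrightarrow> e \<notin> Z"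
  using Cuniq by blast

lemma M2:
  assumes Z: "is_circle E ends Z" "circ_sign \<sigma> Z = -1" "f \<in> Z" "f \<notin> C"
  shows "\<exists>vs es. ear vs es \<and> f \<in> set es \<and> set es \<subseteq> Z \<and> Z - set es \<subseteq> C"
proof -
  have eZ: "e \<notin> Z" using neg_not_e[OF Z] .
  obtain u v where uv: "ends e = {u, v}" "u \<noteq> v" by (rule e_ends)
  have ZE: "Z \<subseteq> E" using Z(1) by (simp add: is_circle_def)
  have eE: "e \<in> E" using Cc(3) CE(1) by blast
  obtain f1 f2 where f12: "ends f = {f1, f2}" "f1 \<noteq> f2"
  proof -
    have "card (ends f) = 2" using G Z(3) ZE by (auto simp: graph_def)
    then show ?thesis using that unfolding card_2_iff by blast
  qed
  have fV: "f1 \<in> verts_of ends Z" "f2 \<in> verts_of ends Z" using f12(1) Z(3) by (auto simp: verts_of_def)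
  have TV: "verts_of ends Z \<subseteq> V" using ZE endsV by (auto simp: verts_of_def)
  have SV: "{u, v} \<subseteq> V" using endsV[OF eE] uv by simp
  obtain A B where AB: "vpath (adjD ends E) A" "vpath (adjD ends E) B" "hd A \<in> {u, v}"
    "last A \<in> verts_of ends Z" "hd B \<in> {u, v}" "last B \<in> verts_of ends Z" "set A \<inter> set B = {}"
    "\<forall>x\<in>set A. x \<in> {u, v} \<longrightarrow> x = hd A" "\<forall>x\<in>set A. x \<in> verts_of ends Z \<longrightarrow> x = last A"
    "\<forall>x\<in>set B. x \<in> {u, v} \<longrightarrow> x = hd B" "\<forall>x\<in>set B. x \<in> verts_of ends Z \<longrightarrow> x = last B"
    by (rule two_disj_paths[OF SV insertI1 insertI2[OF singletonI] uv(2) TV fV(1) fV(2) f12(2)])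
  have "hd A \<in> set A" "hd B \<in> set B" using AB(1,2) by (auto simp: vpath_def)
  then have hAB: "hd A \<noteq> hd B" using AB(7) by (metis IntI empty_iff)
  show ?thesis
  proof (cases "hd A = u")
    case True
    then have hB: "hd B = v" using AB(5) hAB by auto
    have "v \<notin> set A" using AB(8) True uv(2) by auto
    moreover have "u \<notin> set B" using AB(10) hB uv(2) by auto
    ultimately show ?thesis using m2_core[OF Z eZ uv AB(1) True AB(4) _ AB(9) AB(2) hB AB(6) _ AB(11) AB(7)] by blast
  next
    case False
    then have hA: "hd A = v" using AB(3) by auto
    then have hB: "hd B = u" using AB(5) hAB by auto
    have uv': "ends e = {v, u}" "v \<noteq> u" using uv by auto
    have "u \<notin> set A" using AB(8) hA uv(2) by auto
    moreover have "v \<notin> set B" using AB(10) hB uv(2) by auto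
    ultimately show ?thesis using m2_core[OF Z eZ uv' AB(1) hA AB(4) _ AB(9) AB(2) hB AB(6) _ AB(11) AB(7)] by blast
  qed
qed

lemma uniq_neg:
  assumes f: "f \<in> E" "f \<notin> C"
    and same: "\<And>vs es vs' es'. ear vs es \<Longrightarrow> f \<in> set es \<Longrightarrow> ear vs' es' \<Longrightarrow> f \<in> set es' \<Longrightarrow> set es = set es'"
  shows "neg_battery E ends \<sigma> f"
proof -
  obtain vs es where q: "ear vs es" "f \<in> set es" using M1[OF f] by blast
  obtain Z0 where z0: "is_circle E ends Z0" "circ_sign \<sigma> Z0 = -1" "set es \<subseteq> Z0" "Z0 - set es \<subseteq> C" "e \<notin> Z0"
    using ear_neg[OF q(1)] by blast
  have fz: "f \<in> Z0" using q(2) z0(3) by blast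
  have un: "\<And>Z. is_circle E ends Z \<Longrightarrow> circ_sign \<sigma> Z = -1 \<Longrightarrow> f \<in> Z \<Longrightarrow> Z = Z0"
  proof -
    fix Z assume Z: "is_circle E ends Z" "circ_sign \<sigma> Z = -1" "f \<in> Z"
    obtain vs' es' where q': "ear vs' es'" "f \<in> set es'" "set es' \<subseteq> Z" "Z - set es' \<subseteq> C"
      using M2[OF Z f(2)] by blast
    have eq: "set es' = set es" using same[OF q'(1,2) q(1,2)] .
    have eZ: "e \<notin> Z" using neg_not_e[OF Z f(2)] .
    have sub: "(Z - Z0) \<union> (Z0 - Z) \<subseteq> C" using q'(3,4) z0(3,4) eq by blast
    have fin: "finite Z" "finite Z0" using Z(1) z0(1) by (auto simp: is_circle_def)
    have ev: "evenset ends ((Z - Z0) \<union> (Z0 - Z))"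
      using even_symdiff[OF fin circle_even[OF Z(1)] circle_even[OF z0(1)]] .
    have "(Z - Z0) \<union> (Z0 - Z) = {}"
      by (rule even_sub_circle[OF Cc(1) sub ev Cc(3) _ G]) (use eZ z0(5) in blast)
    then show "Z = Z0" by blast
  qed
  show ?thesis unfolding neg_battery_def
  proof (rule ex1I[of _ Z0])
    show "is_circle E ends Z0 \<and> circ_sign \<sigma> Z0 = - 1 \<and> f \<in> Z0" using z0(1,2) fz by simp
  next
    fix Z assume "is_circle E ends Z \<and> circ_sign \<sigma> Z = - 1 \<and> f \<in> Z"
    then show "Z = Z0" using un by simp
  qed
qed

lemma ear_minus_C: "ear vs es \<Longrightarrow> set es \<inter> C = {}"
  using is_path_set by (fastforce simp: ear_def)

lemma nb_ears:
  assumes nb: "neg_battery E ends \<sigma> f" and q1: "ear vs es" "f \<in> set es" and q2: "ear vs' es'" "f \<in> set es'"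
  shows "set es = set es'"
proof -
  obtain Z where z: "is_circle E ends Z" "circ_sign \<sigma> Z = -1" "set es \<subseteq> Z" "Z - set es \<subseteq> C"
    using ear_neg[OF q1(1)] by blast
  obtain Z' where z': "is_circle E ends Z'" "circ_sign \<sigma> Z' = -1" "set es' \<subseteq> Z'" "Z' - set es' \<subseteq> C"
    using ear_neg[OF q2(1)] by blast
  obtain Y where Y: "\<forall>W. is_circle E ends W \<and> circ_sign \<sigma> W = -1 \<and> f \<in> W \<longrightarrow> W = Y"
    using nb unfolding neg_battery_def by (elim ex1E) blast
  have "f \<in> Z" "f \<in> Z'" using z(3) z'(3) q1(2) q2(2) by auto
  then have "Z = Y" "Z' = Y" using Y z(1,2) z'(1,2) by auto
  then have "Z = Z'" by simp
  moreover have "Z - C = set es" using z ear_minus_C[OF q1(1)] by blast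
  moreover have "Z' - C = set es'" using z' ear_minus_C[OF q2(1)] by blast
  ultimately show ?thesis by simp
qed

lemma ear_rev: "ear vs es \<Longrightarrow> ear (rev vs) (rev es)"
proof -
  assume q: "ear vs es"
  then have P: "is_path (E - C) ends vs es" by (simp add: ear_def)
  have "is_path (E - C) ends (rev vs) (rev es)" using is_path_rev[OF P] .
  moreover have "hd (rev vs) = last vs" "last (rev vs) = hd vs" by (simp_all add: hd_rev last_rev)
  ultimately show ?thesis using q unfolding ear_def by auto
qed

lemma ear_idx:
  assumes q: "ear vs es"
  shows "length vs = Suc (length es)" "distinct vs" "hd vs = vs ! 0" "last vs = vs ! length es"
    "\<And>j. 0 < j \<Longrightarrow> j < length es \<Longrightarrow> vs ! j \<notin> VC"
proof -
  have P: "is_path (E - C) ends vs es" using q by (simp add: ear_def)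
  show l: "length vs = Suc (length es)" using is_path_len[OF P] .
  show d: "distinct vs" using is_path_distinct[OF P] .
  show h: "hd vs = vs ! 0" using is_path_hd[OF P] .
  show la: "last vs = vs ! length es" using is_path_last[OF P] .
  fix j assume j: "0 < j" "j < length es"
  have "vs ! j \<noteq> vs ! 0" "vs ! j \<noteq> vs ! length es" using d l j by (auto simp: nth_eq_iff_index_eq)
  moreover have "vs ! j \<in> set vs" using l j by simp
  ultimately show "vs ! j \<notin> VC" using q h la unfolding ear_def by metis
qed

end


context ctx begin

abbreviation comp where "comp f \<equiv> bridge_comp V E ends C f"
abbreviation Dg where "Dg f \<equiv> bridge_edges V E ends C f"
abbreviation Att where "Att f \<equiv> attachments V E ends C f"

lemma comp_off: "comp f \<inter> VC = {}" by (auto simp: bridge_comp_def)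

lemma Dg_sub: "f \<in> E \<Longrightarrow> f \<notin> C \<Longrightarrow> Dg f \<subseteq> E - C" by (auto simp: bridge_edges_def)

lemma Att_VC: "Att f \<subseteq> VC" by (auto simp: attachments_def)

lemma adj_avoid_C: "(a, b) \<in> adj_avoid E ends VC \<Longrightarrow> adjD ends (E - C) a b"
  unfolding adj_avoid_def adjD_def using ends_VC by blast

lemma ear_conn:
  assumes q: "ear vs es" and j: "0 < j" "j < length es"
  shows "(vs ! 1, vs ! j) \<in> (adj_avoid E ends VC)\<^sup>* \<and> (vs ! j, vs ! 1) \<in> (adj_avoid E ends VC)\<^sup>*"
  using j
proof (induction j)
  case 0 then show ?case by simp
next
  case (Suc m)
  show ?case
  proof (cases "m = 0")
    case True then show ?thesis by simp
  next
    case False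
    have IH: "(vs ! 1, vs ! m) \<in> (adj_avoid E ends VC)\<^sup>* \<and> (vs ! m, vs ! 1) \<in> (adj_avoid E ends VC)\<^sup>*"
      using Suc.IH False Suc.prems by simp
    have P: "is_path (E - C) ends vs es" using q by (simp add: ear_def)
    have ed: "es ! m \<in> E - C" "ends (es ! m) = {vs ! m, vs ! Suc m}" using is_path_edge[OF P, of m] Suc.prems by auto
    have n1: "vs ! m \<notin> VC" using ear_idx(5)[OF q, of m] False Suc.prems by simp
    have n2: "vs ! Suc m \<notin> VC" using ear_idx(5)[OF q, of "Suc m"] Suc.prems by simp
    have s1: "(vs ! m, vs ! Suc m) \<in> adj_avoid E ends VC" using ed n1 n2 by (auto simp: adj_avoid_def)
    have s2: "(vs ! Suc m, vs ! m) \<in> adj_avoid E ends VC" using ed n1 n2 by (auto simp: adj_avoid_def insert_commute)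
    have a: "(vs ! 1, vs ! Suc m) \<in> (adj_avoid E ends VC)\<^sup>*" using rtrancl_into_rtrancl[OF conjunct1[OF IH] s1] .
    have b: "(vs ! Suc m, vs ! 1) \<in> (adj_avoid E ends VC)\<^sup>*" using converse_rtrancl_into_rtrancl[OF s2 conjunct2[OF IH]] .
    show ?thesis using a b by simp
  qed
qed

lemma ear_f_idx:
  assumes q: "ear vs es" "f \<in> set es"
  obtains i where "i < length es" "es ! i = f" "ends f = {vs ! i, vs ! Suc i}"
proof -
  obtain i where i: "i < length es" "es ! i = f" using q(2) by (metis in_set_conv_nth)
  have P: "is_path (E - C) ends vs es" using q by (simp add: ear_def)
  have "ends f = {vs ! i, vs ! Suc i}" using is_path_edge[OF P i(1)] i(2) by simp
  then show ?thesis using that i by blast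
qed

lemma ear_vidx:
  assumes q: "ear vs es" and x: "x \<in> set vs" "x \<notin> VC"
  obtains k where "0 < k" "k < length es" "vs ! k = x"
proof -
  obtain k where k: "k < length vs" "vs ! k = x" using x(1) by (metis in_set_conv_nth)
  have hv: "hd vs \<in> VC" "last vs \<in> VC" using q by (auto simp: ear_def)
  have "k \<noteq> 0"
  proof
    assume "k = 0" then have "x = hd vs" using k ear_idx(3)[OF q] by simp
    then show False using x(2) hv by simp
  qed
  moreover have "k \<noteq> length es"
  proof
    assume "k = length es" then have "x = last vs" using k ear_idx(4)[OF q] by simp
    then show False using x(2) hv by simp
  qed
  ultimately show ?thesis using that k ear_idx(1)[OF q] by auto
qed

lemma ear_in_pt:
  assumes f: "f \<in> E" "f \<notin> C" and q: "ear vs es" "f \<in> set es"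
  shows "set es \<in> paths_through V E ends C f"
proof -
  have P: "is_path (E - C) ends vs es" and hl: "hd vs \<noteq> last vs" "hd vs \<in> VC" "last vs \<in> VC"
    using q by (auto simp: ear_def)
  note idx = ear_idx[OF q(1)]
  define n where "n = length es"
  obtain i where i: "i < n" "es ! i = f" "ends f = {vs ! i, vs ! Suc i}" using ear_f_idx[OF q] n_def by blast
  have ne: "es \<noteq> []" using path_ne_es[OF P hl(1)] .
  show ?thesis
  proof (cases "ends f \<subseteq> VC")
    case True
    have "vs ! i \<in> VC" "vs ! Suc i \<in> VC" using True i(3) by auto
    then have i0: "i = 0" and i1: "Suc i = n" using idx(5)[of i] idx(5)[of "Suc i"] i(1) n_def by (metis neq0_conv, metis Suc_lessI zero_less_Suc)
    have es: "es = [f]" using i i0 i1 n_def by (metis One_nat_def length_0_conv length_Suc_conv nth_Cons_0)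
    have D: "Dg f = {f}" using True by (simp add: bridge_edges_def)
    have Pf: "is_path (Dg f) ends vs es" using is_path_mono[OF P] es D by simp
    have A: "Att f = ends f" using D True by (auto simp: attachments_def verts_of_def)
    have "hd vs \<in> ends f" "last vs \<in> ends f" using i(3) i0 i1 idx(3,4) n_def by auto
    then show ?thesis unfolding paths_through_def using Pf hl(1) A by blast
  next
    case False
    then obtain x0 where x0: "x0 \<in> ends f" "x0 \<notin> VC" by blast
    have x0v: "x0 \<in> set vs" using x0(1) i(3) idx(1) i(1) n_def by auto
    obtain k where k: "0 < k" "k < n" "vs ! k = x0" using ear_vidx[OF q(1) x0v x0(2)] n_def by blast
    have inc: "\<And>j. 0 < j \<Longrightarrow> j < n \<Longrightarrow> vs ! j \<in> comp f"
    proof -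
      fix j assume j: "0 < j" "j < n"
      have c1: "(vs ! k, vs ! 1) \<in> (adj_avoid E ends VC)\<^sup>*" using ear_conn[OF q(1) k(1)] k(2) n_def by simp
      have c2: "(vs ! 1, vs ! j) \<in> (adj_avoid E ends VC)\<^sup>*" using ear_conn[OF q(1) j(1)] j(2) n_def by simp
      have "vs ! j \<in> ends (es ! j)" using is_path_edge[OF P, of j] j n_def by simp
      moreover have "es ! j \<in> E" using is_path_edge[OF P, of j] j n_def by simp
      ultimately have "vs ! j \<in> V" using endsV by blast
      moreover have "vs ! j \<notin> VC" using idx(5) j n_def by simp
      ultimately show "vs ! j \<in> comp f" unfolding bridge_comp_def
        using rtrancl_trans[OF c1 c2] k(3) x0 by blast
    qed
    have eD: "\<And>m. m < n \<Longrightarrow> es ! m \<in> Dg f"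
    proof -
      fix m assume m: "m < n"
      have ed: "es ! m \<in> E - C" "ends (es ! m) = {vs ! m, vs ! Suc m}" using is_path_edge[OF P, of m] m n_def by auto
      have "vs ! m \<in> comp f \<or> vs ! Suc m \<in> comp f"
      proof (cases "m = 0")
        case False then show ?thesis using inc m by simp
      next
        case True
        show ?thesis
        proof (cases "Suc 0 < n")
          case True' : True then show ?thesis using inc True by simp
        next
          case False
          then have "n = 1" using m by simp
          then have "i = 0" using i(1) by simp
          then have "ends f \<subseteq> VC" using i(3) idx(3,4) hl \<open>n = 1\<close> n_def by simp
          then show ?thesis using \<open>\<not> ends f \<subseteq> VC\<close> by blast
        qed
      qed
      then show "es ! m \<in> Dg f" using ed False by (auto simp: bridge_edges_def)
    qed
    have sD: "set es \<subseteq> Dg f" using eD n_def by (auto simp: in_set_conv_nth)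
    have Pf: "is_path (Dg f) ends vs es" using is_path_mono[OF P sD] .
    have "hd vs \<in> ends (es ! 0)" using is_path_hd_in[OF P ne] .
    moreover have "es ! 0 \<in> Dg f" using eD ne n_def by simp
    ultimately have hA: "hd vs \<in> Att f" using hl by (auto simp: attachments_def verts_of_def)
    have "last vs \<in> ends (es ! (n - 1))" using is_path_edge[OF P, of "n - 1"] idx(4) ne n_def by simp
    moreover have "es ! (n - 1) \<in> Dg f" using eD ne n_def by simp
    ultimately have lA: "last vs \<in> Att f" using hl by (auto simp: attachments_def verts_of_def)
    show ?thesis unfolding paths_through_def using Pf hl(1) hA lA by blast
  qed
qed

end


context ctx begin

lemma three_core:
  assumes q: "ear vs es" and i: "i < k" "es ! i = f" and k: "0 < k" "k < length es"
    and T: "vpath (adjD ends (E - C)) (vs ! k # r2 @ [w])" and r2: "set r2 \<inter> set vs = {}" "set r2 \<inter> VC = {}"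
    and w: "w \<in> VC" "w \<notin> set vs"
  shows "\<exists>vs' es'. ear vs' es' \<and> f \<in> set es' \<and> set es' \<noteq> set es"
proof -
  have P: "is_path (E - C) ends vs es" and hl: "hd vs \<in> VC" using q by (auto simp: ear_def)
  note idx = ear_idx[OF q]
  obtain esT where pT: "is_path (E - C) ends (vs ! k # r2 @ [w]) esT" using vpath_to_path[OF T] by blast
  have pt: "is_path (E - C) ends (take (Suc k) vs) (take k es)" using is_path_take[OF P] k by simp
  have lt: "last (take (Suc k) vs) = vs ! k" using k idx(1) by (simp add: take_Suc_conv_app_nth)
  have st: "set (take (Suc k) vs) \<subseteq> set vs" by (rule set_take_subset)
  have P2: "is_path (E - C) ends (take (Suc k) vs @ tl (vs ! k # r2 @ [w])) (take k es @ esT)"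
    by (rule is_path_append[OF pt pT]) (use lt st r2(1) w(2) in auto)
  define vs' where "vs' = take (Suc k) vs @ r2 @ [w]"
  define es' where "es' = take k es @ esT"
  have P': "is_path (E - C) ends vs' es'" using P2 vs'_def es'_def by simp
  have h': "hd vs' = hd vs" using idx(1) unfolding vs'_def by (cases vs) auto
  have l': "last vs' = w" unfolding vs'_def by simp
  have hw: "hd vs \<noteq> w" using w(2) idx(1) by (metis hd_in_set length_greater_0_conv zero_less_Suc)
  have vc: "\<forall>v\<in>set vs'. v \<in> VC \<longrightarrow> v = hd vs' \<or> v = last vs'"
  proof (intro ballI impI)
    fix v assume v: "v \<in> set vs'" "v \<in> VC"
    show "v = hd vs' \<or> v = last vs'"
    proof (cases "v \<in> set (take (Suc k) vs)")
      case True
      then obtain j where j: "j < length (take (Suc k) vs)" "take (Suc k) vs ! j = v" by (metis in_set_conv_nth)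
      have jk: "j \<le> k" using j(1) by simp
      have vj: "vs ! j = v" using j by simp
      have "j = 0"
      proof (rule ccontr)
        assume "j \<noteq> 0"
        then have "vs ! j \<notin> VC" using idx(5)[of j] jk k by simp
        then show False using vj v(2) by simp
      qed
      then show ?thesis using vj idx(3) h' by simp
    next
      case False
      then have "v \<in> set r2 \<or> v = w" using v(1) vs'_def by auto
      then show ?thesis using r2(2) v(2) l' by auto
    qed
  qed
  have e': "ear vs' es'" unfolding ear_def using P' h' l' hw hl w(1) vc by simp
  have fin: "f \<in> set es'"
  proof -
    have "take k es ! i = f" using i by simp
    moreover have "i < length (take k es)" using i k by simp
    ultimately show ?thesis unfolding es'_def by (metis nth_mem in_set_conv_nth set_append UnI1)
  qed
  have ne: "es' \<noteq> []" using fin by auto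
  have "w \<in> verts_of ends (set es')" using is_path_verts[OF P' ne] l' vs'_def by simp
  moreover have "w \<notin> verts_of ends (set es)"
  proof -
    have "es \<noteq> []" using k by auto
    then show ?thesis using is_path_verts[OF P] w(2) by simp
  qed
  ultimately have "set es' \<noteq> set es" by auto
  then show ?thesis using e' fin by blast
qed

lemma three:
  assumes f: "f \<in> E" "f \<notin> C" "\<not> ends f \<subseteq> VC" and q: "ear vs es" "f \<in> set es"
    and w: "w \<in> Att f" "w \<noteq> hd vs" "w \<noteq> last vs"
  shows "\<exists>vs' es'. ear vs' es' \<and> f \<in> set es' \<and> set es' \<noteq> set es"
proof -
  note idx = ear_idx[OF q(1)]
  define n where "n = length es"
  have D: "Dg f = {g \<in> E - C. ends g \<inter> comp f \<noteq> {}}" using f(3) by (simp add: bridge_edges_def)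
  have wVC: "w \<in> VC" using w(1) Att_VC by blast
  obtain g where g: "g \<in> Dg f" "w \<in> ends g" using w(1) by (auto simp: attachments_def verts_of_def)
  have gE: "g \<in> E - C" "ends g \<inter> comp f \<noteq> {}" using g(1) D by auto
  obtain w' where w': "w' \<noteq> w" "ends g = {w, w'}" using graph_ends[OF G _ g(2)] gE(1) by blast
  have wc: "w \<notin> comp f" using wVC comp_off by blast
  have w'c: "w' \<in> comp f" using gE(2) w' wc by auto
  then obtain x1 where x1: "x1 \<in> ends f" "x1 \<notin> VC" "(x1, w') \<in> (adj_avoid E ends VC)\<^sup>*"
    by (auto simp: bridge_comp_def)
  obtain P0 where P0: "vpath (\<lambda>a b. (a, b) \<in> adj_avoid E ends VC) P0" "hd P0 = x1" "last P0 = w'"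
    "set P0 \<subseteq> insert x1 (Range (adj_avoid E ends VC))" using rt_to_vpath[OF x1(3)] by blast
  have RVC: "Range (adj_avoid E ends VC) \<inter> VC = {}" by (auto simp: adj_avoid_def)
  have P0VC: "set P0 \<inter> VC = {}" using P0(4) RVC x1(2) by blast
  obtain i where i: "i < n" "es ! i = f" "ends f = {vs ! i, vs ! Suc i}" using ear_f_idx[OF q] n_def by blast
  have x1v: "x1 \<in> set vs" using x1(1) i(3) idx(1) i(1) n_def by auto
  have "\<exists>z\<in>set P0. z \<in> set vs" using x1v P0(1,2) by (metis hd_in_set vpath_def)
  then obtain r1 p r2 where Pe: "P0 = r1 @ p # r2" and p: "p \<in> set vs" and r2: "\<forall>z\<in>set r2. z \<notin> set vs"
    using split_list_last_prop[of P0 "\<lambda>z. z \<in> set vs"] by blast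
  have pr2: "vpath (\<lambda>a b. (a, b) \<in> adj_avoid E ends VC) (p # r2)" using vpath_suffix[of _ r1 "p # r2"] P0(1) Pe by simp
  have lp: "last (p # r2) = w'" using P0(3) Pe by simp
  have pVC: "p \<notin> VC" "set r2 \<inter> VC = {}" using P0VC Pe by auto
  obtain k where k: "0 < k" "k < n" "vs ! k = p" using ear_vidx[OF q(1) p pVC(1)] n_def by blast
  have T1: "vpath (adjD ends (E - C)) (p # r2)" using vpath_mono[OF pr2] adj_avoid_C by blast
  have wnot: "w \<notin> set (p # r2)" using pVC wVC by auto
  have "adjD ends (E - C) (last (p # r2)) w" using lp gE(1) w' by (auto simp: adjD_def insert_commute)
  then have T: "vpath (adjD ends (E - C)) (p # r2 @ [w])" using vpath_snoc[OF T1 _ wnot] by simp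
  have r2v: "set r2 \<inter> set vs = {}" using r2 by blast
  have wv: "w \<notin> set vs"
  proof
    assume "w \<in> set vs" then show False using q(1) w(2,3) wVC unfolding ear_def by blast
  qed
  show ?thesis
  proof (cases "i < k")
    case True
    show ?thesis using three_core[OF q(1) True i(2) k(1) k(2)[unfolded n_def]] T k(3) r2v pVC(2) wVC wv by simp
  next
    case False
    have q': "ear (rev vs) (rev es)" using ear_rev[OF q(1)] .
    have l: "length (rev es) = n" using n_def by simp
    have a1: "n - 1 - i < n - k" using False i(1) k by simp
    have a2: "rev es ! (n - 1 - i) = f" using i(1,2) n_def by (simp add: rev_nth)
    have a3: "0 < n - k" "n - k < length (rev es)" using k l by auto
    have a4: "rev vs ! (n - k) = p" using k idx(1) n_def by (simp add: rev_nth)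
    have "\<exists>vs' es'. ear vs' es' \<and> f \<in> set es' \<and> set es' \<noteq> set (rev es)"
      using three_core[OF q' a1 a2 a3] T a4 r2v pVC(2) wVC wv by simp
    then show ?thesis by simp
  qed
qed

end


context ctx begin

lemma pt_ear:
  assumes f: "f \<in> E" "f \<notin> C" and nb: "neg_battery E ends \<sigma> f"
    and q: "ear vs es" "f \<in> set es"
    and p: "is_path (Dg f) ends vs' es'" "hd vs' \<noteq> last vs'" "hd vs' \<in> Att f" "last vs' \<in> Att f" "f \<in> set es'"
  shows "ear vs' es'"
proof -
  have pE: "is_path (E - C) ends vs' es'" using is_path_mono[OF p(1)] is_path_set[OF p(1)] Dg_sub[OF f] by blast
  have ne: "es' \<noteq> []" using path_ne_es[OF p(1) p(2)] .
  have VCm: "\<forall>v\<in>set vs'. v \<in> VC \<longrightarrow> v = hd vs' \<or> v = last vs'"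
  proof (rule ccontr)
    assume "\<not> (\<forall>v\<in>set vs'. v \<in> VC \<longrightarrow> v = hd vs' \<or> v = last vs')"
    then obtain x where x: "x \<in> set vs'" "x \<in> VC" "x \<noteq> hd vs'" "x \<noteq> last vs'" by blast
    have "set vs' = verts_of ends (set es')" using is_path_verts[OF p(1) ne] by simp
    moreover have "verts_of ends (set es') \<subseteq> verts_of ends (Dg f)" using is_path_set[OF p(1)] by (auto simp: verts_of_def)
    ultimately have xA: "x \<in> Att f" using x by (auto simp: attachments_def)
    show False
    proof (cases "ends f \<subseteq> VC")
      case True
      then have "Dg f = {f}" by (simp add: bridge_edges_def)
      then have "set es' \<subseteq> {f}" using is_path_set[OF p(1)] by simp
      moreover have "distinct es'" using is_path_distinct_es[OF p(1)] .
      ultimately have "length es' \<le> 1" by (metis card_mono distinct_card finite.emptyI finite.insertI is_singletonI is_singleton_altdef)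
      then have "length es' = 1" using ne by (cases es') auto
      then have "length vs' = 2" using is_path_len[OF p(1)] by simp
      then obtain a b where "vs' = [a, b]" by (auto simp: length_Suc_conv numeral_2_eq_2)
      then show False using x by auto
    next
      case False
      have "\<exists>w. w \<in> Att f \<and> w \<noteq> hd vs \<and> w \<noteq> last vs"
      proof (cases "hd vs' \<noteq> hd vs \<and> hd vs' \<noteq> last vs")
        case True then show ?thesis using p(3) by blast
      next
        case c1: False
        show ?thesis
        proof (cases "last vs' \<noteq> hd vs \<and> last vs' \<noteq> last vs")
          case True then show ?thesis using p(4) by blast
        next
          case c2: False
          have "x \<noteq> hd vs \<and> x \<noteq> last vs" using c1 c2 x(3,4) p(2) by auto
          then show ?thesis using xA by blast
        qed
      qed
      then obtain w where w: "w \<in> Att f" "w \<noteq> hd vs" "w \<noteq> last vs" by blast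
      obtain vs'' es'' where e'': "ear vs'' es''" "f \<in> set es''" "set es'' \<noteq> set es"
        using three[OF f False q w] by blast
      then show False using nb_ears[OF nb e''(1,2) q] by simp
    qed
  qed
  show ?thesis unfolding ear_def using pE p(2,3,4) Att_VC VCm by blast
qed

lemma main_iff:
  assumes f: "f \<in> E" "f \<notin> C"
  shows "neg_battery E ends \<sigma> f \<longleftrightarrow> (\<exists>!P. P \<in> paths_through V E ends C f \<and> f \<in> P)"
proof
  assume nb: "neg_battery E ends \<sigma> f"
  obtain vs es where q: "ear vs es" "f \<in> set es" using M1[OF f] by blast
  have inP: "set es \<in> paths_through V E ends C f" using ear_in_pt[OF f q] .
  show "\<exists>!P. P \<in> paths_through V E ends C f \<and> f \<in> P"
  proof (rule ex1I[of _ "set es"])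
    show "set es \<in> paths_through V E ends C f \<and> f \<in> set es" using inP q(2) by simp
  next
    fix P assume P: "P \<in> paths_through V E ends C f \<and> f \<in> P"
    then obtain vs' es' where p: "P = set es'" "is_path (Dg f) ends vs' es'" "hd vs' \<noteq> last vs'"
      "hd vs' \<in> Att f" "last vs' \<in> Att f" unfolding paths_through_def by blast
    have fe: "f \<in> set es'" using P p(1) by simp
    have "ear vs' es'" using pt_ear[OF f nb q p(2,3,4,5) fe] .
    then show "P = set es" using nb_ears[OF nb _ fe q] p(1) by simp
  qed
next
  assume ex: "\<exists>!P. P \<in> paths_through V E ends C f \<and> f \<in> P"
  show "neg_battery E ends \<sigma> f"
  proof (rule uniq_neg[OF f])
    fix vs es vs' es' assume q: "ear vs es" "f \<in> set es" and q': "ear vs' es'" "f \<in> set es'"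
    have a: "set es \<in> paths_through V E ends C f \<and> f \<in> set es" using ear_in_pt[OF f q] q(2) by simp
    have b: "set es' \<in> paths_through V E ends C f \<and> f \<in> set es'" using ear_in_pt[OF f q'] q'(2) by simp
    show "set es = set es'" using ex a b by (metis ex1E)
  qed
qed

end

theorem mainTheorem4:
  fixes V :: "'v set" and E :: "'e set" and ends :: "'e \<Rightarrow> 'v set"
    and \<sigma> :: "'e \<Rightarrow> int" and e f :: 'e and C :: "'e set"
  assumes "signed_graph V E ends \<sigma>"
    and "is_block V E ends"
    and "card E \<noteq> 1"
    and "\<not> is_circle E ends E"
    and "neg_battery_circ E ends \<sigma> e C"
    and "f \<in> E" and "f \<notin> C"
  shows "neg_battery E ends \<sigma> f \<longleftrightarrow>
         (\<exists>!P. P \<in> paths_through V E ends C f \<and> f \<in> P)"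
proof -
  interpret ctx V E ends \<sigma> e C using assms(1,2,5) by unfold_locales
  show ?thesis using main_iff[OF assms(6,7)] .
qed


end
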